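(* Fix $c>0$, let $\Phi\in\Omega(n,\lfloor c2^n\rfloor)$, and let $p=p(n)$ be integers with $1\le p(n)\le n$ and $\lim_{n\to\infty}\big[n-\log_2 n-p(n)\big]=\infty$. Then the conditional probability that PUR rejects at stage $p(n)$, given that PUR reaches stage $p(n)$, is $1-o(1)$.
   Context: $\mathcal H_n$ is the set of pairs $(P,S)$ with $P\in\{\emptyset,\{1\},\dots,\{n\}\}$, $S\subseteq\{1,\dots,n\}$, $(P,S)\ne(\emptyset,\emptyset)$, representing the Horn clause $\bigvee_{i\in P}x_i\vee\bigvee_{j\in S}\neg x_j$ (so $|\mathcal H_n|\sim n2^n$; the paper writes this number as $(n+2)2^n-1$); $\Omega(n,m)$ is the distribution of the conjunction of $m$ clauses drawn independently, uniformly with repetition from $\mathcal H_n$. Algorithm PUR on a Horn formula $\Phi$: if $\Phi$ has no positive unit clause (single literal $x_i$), accept. Otherwise choose uniformly at random a positive unit clause $x_i$; if $\Phi$ contains the clause $\neg x_i$, reject; otherwise set $x_i=1$ (delete clauses containing $x_i$, delete $\neg x_i$ from the others) and recurse. Stages: stage $t$ is the iteration performed when exactly $t$ variables are unassigned (first iteration = stage $n$). PUR reaches stage $t$ if it neither accepted nor rejected at stages $n,\dots,t+1$; PUR rejects at stage $t$ if it reaches stage $t$ and returns FALSE in that iteration. *)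

theory Defs
  imports "HOL-Probability.Probability"
begin

text \<open>A Horn clause (P,S): P is the set of positive literals (empty or a singleton),
  S the set of negated variables.\<close>
type_synonym clause = "nat set \<times> nat set"

definition horn_clauses :: "nat \<Rightarrow> clause set" where
  "horn_clauses n = {(P, S). (P = {} \<or> (\<exists>i\<in>{1..n}. P = {i})) \<and> S \<subseteq> {1..n} \<and> (P, S) \<noteq> ({}, {})}"

text \<open>Omega(n,m): m clauses drawn independently and uniformly (with repetition) from H_n.\<close>
fun formula_pmf :: "nat \<Rightarrow> nat \<Rightarrow> clause list pmf" where
  "formula_pmf n 0 = return_pmf []"
| "formula_pmf n (Suc m) =
     pmf_of_set (horn_clauses n) \<bind> (\<lambda>c. map_pmf (\<lambda>cs. c # cs) (formula_pmf n m))"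

definition pos_units :: "clause list \<Rightarrow> nat set" where
  "pos_units \<Phi> = {i. ({i}, {}) \<in> set \<Phi>}"

definition assign_true :: "nat \<Rightarrow> clause list \<Rightarrow> clause list" where
  "assign_true i \<Phi> = map (\<lambda>(P, S). (P, S - {i})) (filter (\<lambda>(P, S). i \<notin> P) \<Phi>)"

lemma finite_pos_units: "finite (pos_units \<Phi>)"
proof -
  have "pos_units \<Phi> \<subseteq> (\<lambda>c. the_elem (fst c)) ` set \<Phi>"
    unfolding pos_units_def by (force)
  thus ?thesis by (rule finite_subset) simp
qed

lemma card_assign_true_less:
  assumes "i \<in> pos_units \<Phi>"
  shows "card (set (assign_true i \<Phi>)) < card (set \<Phi>)"
proof -
  let ?f = "\<lambda>(P::nat set, S). (P, S - {i})"
  let ?A = "set (filter (\<lambda>(P, S). i \<notin> P) \<Phi>)"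
  have eq: "set (assign_true i \<Phi>) = ?f ` ?A" unfolding assign_true_def by simp
  have "?A \<subset> set \<Phi>" using assms unfolding pos_units_def by auto
  hence "card ?A < card (set \<Phi>)" by (simp add: psubset_card_mono)
  moreover have "card (?f ` ?A) \<le> card ?A" by (rule card_image_le) simp
  ultimately show ?thesis using eq by simp
qed

text \<open>The first argument t is the number of currently unassigned
  variables, i.e. the current stage. The result is (s, b): PUR terminated at stage s,
  accepting (b = True) or rejecting (b = False).\<close>
function pur :: "nat \<Rightarrow> clause list \<Rightarrow> (nat \<times> bool) pmf" where
  "pur t \<Phi> =
     (if pos_units \<Phi> = {} then return_pmf (t, True)
      else pmf_of_set (pos_units \<Phi>) \<bind>
        (\<lambda>i. if ({}, {i}) \<in> set \<Phi> then return_pmf (t, False)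
             else pur (t - 1) (assign_true i \<Phi>)))"
  by auto
termination
proof (relation "Wellfounded.measure (\<lambda>(t, \<Phi>). card (set \<Phi>))")
  show "wf (Wellfounded.measure (\<lambda>(t, \<Phi>). card (set \<Phi>)))" by simp
next
  fix t \<Phi> i
  assume "pos_units \<Phi> \<noteq> {}" "i \<in> set_pmf (pmf_of_set (pos_units \<Phi>))"
  hence "i \<in> pos_units \<Phi>" using finite_pos_units by simp
  thus "((t - 1, assign_true i \<Phi>), t, \<Phi>) \<in> Wellfounded.measure (\<lambda>(t, \<Phi>). card (set \<Phi>))"
    using card_assign_true_less by simp
qed

definition pur_run :: "nat \<Rightarrow> nat \<Rightarrow> (nat \<times> bool) pmf" where
  "pur_run n m = formula_pmf n m \<bind> pur n"

definition reaches_stage :: "nat \<Rightarrow> nat \<times> bool \<Rightarrow> bool" where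
  "reaches_stage t r \<longleftrightarrow> fst r \<le> t"

definition rejects_at_stage :: "nat \<Rightarrow> nat \<times> bool \<Rightarrow> bool" where
  "rejects_at_stage t r \<longleftrightarrow> fst r = t \<and> \<not> snd r"

end

theory Submission
  imports Defs "HOL-Real_Asymp.Real_Asymp"
begin
abbreviation HH where "HH n \<equiv> horn_clauses n"

definition Ps :: "nat \<Rightarrow> nat set set" where
  "Ps n = insert {} ((\<lambda>i. {i}) ` {1..n})"

lemma card_Ps: "card (Ps n) = n + 1"
proof -
  have "card ((\<lambda>i. {i::nat}) ` {1..n}) = n" by (subst card_image) (auto simp: inj_on_def)
  moreover have "{} \<notin> (\<lambda>i. {i::nat}) ` {1..n}" by auto
  ultimately show ?thesis unfolding Ps_def by simp
qed

lemma finite_Ps: "finite (Ps n)" unfolding Ps_def by simp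

lemma HH_eq: "HH n = Ps n \<times> Pow {1..n} - {({}, {})}"
  unfolding horn_clauses_def Ps_def by auto

lemma finite_HH: "finite (HH n)"
  unfolding HH_eq by (auto intro: finite_Ps)

lemma card_HH: "card (HH n) = (n + 1) * 2 ^ n - 1"
proof -
  have "({}, {}) \<in> Ps n \<times> Pow {1..n}" unfolding Ps_def by auto
  then show ?thesis unfolding HH_eq
    by (subst card_Diff_singleton) (auto simp: card_cartesian_product card_Ps card_Pow finite_Ps)
qed

lemma HH_nonempty: "n \<ge> 1 \<Longrightarrow> HH n \<noteq> {}"
proof -
  assume "n \<ge> 1"
  then have "({1}, {}) \<in> HH n" unfolding horn_clauses_def by auto
  then show ?thesis by auto
qed

lemma card_HH_pos: "n \<ge> 1 \<Longrightarrow> card (HH n) > 0"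
  using HH_nonempty finite_HH by (simp add: card_gt_0_iff)

fun EE :: "nat \<Rightarrow> nat \<Rightarrow> (clause list \<Rightarrow> real) \<Rightarrow> real" where
  "EE n 0 f = f []"
| "EE n (Suc m) f = (\<Sum>c\<in>HH n. EE n m (\<lambda>xs. f (c # xs))) / card (HH n)"

lemma measure_bind_pmf_of_set:
  assumes "finite U" "U \<noteq> {}"
  shows "measure (measure_pmf (pmf_of_set U \<bind> f)) A = (\<Sum>i\<in>U. measure (measure_pmf (f i)) A) / card U"
proof -
  have "emeasure (measure_pmf (pmf_of_set U \<bind> f)) A = (\<Sum>i\<in>U. emeasure (measure_pmf (f i)) A) / card U"
    using assms by (simp add: nn_integral_pmf_of_set)
  also have "\<dots> = ennreal ((\<Sum>i\<in>U. measure (measure_pmf (f i)) A) / card U)"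
    using assms by (simp add: measure_pmf.emeasure_eq_measure sum_nonneg divide_ennreal
        ennreal_of_nat_eq_real_of_nat card_gt_0_iff)
  finally show ?thesis
    by (simp add: measure_pmf.emeasure_eq_measure sum_nonneg divide_nonneg_nonneg)
qed

lemma measure_formula_bind:
  assumes "n \<ge> 1"
  shows "measure (measure_pmf (formula_pmf n m \<bind> g)) A = EE n m (\<lambda>\<Phi>. measure (measure_pmf (g \<Phi>)) A)"
proof (induction m arbitrary: g)
  case 0
  then show ?case by (simp add: bind_return_pmf)
next
  case (Suc m)
  have "formula_pmf n (Suc m) \<bind> g = pmf_of_set (HH n) \<bind> (\<lambda>c. formula_pmf n m \<bind> (\<lambda>xs. g (c # xs)))"
    by (simp add: bind_assoc_pmf bind_map_pmf)
  then show ?case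
    using Suc assms by (simp add: measure_bind_pmf_of_set finite_HH HH_nonempty)
qed

declare pur.simps[simp del]

definition red :: "nat set \<Rightarrow> clause list \<Rightarrow> clause list" where
  "red B \<Phi> = map (\<lambda>(P, S). (P, S - B)) (filter (\<lambda>(P, S). P \<inter> B = {}) \<Phi>)"

lemma red_empty[simp]: "red {} \<Phi> = \<Phi>"
  unfolding red_def by (induction \<Phi>) auto

lemma assign_red: "assign_true i (red B \<Phi>) = red (insert i B) \<Phi>"
  unfolding red_def assign_true_def by (induction \<Phi>) auto

lemma mem_red: "(P, S') \<in> set (red B \<Phi>) \<longleftrightarrow> (\<exists>S. (P, S) \<in> set \<Phi> \<and> P \<inter> B = {} \<and> S' = S - B)"
  unfolding red_def by (auto simp: image_iff)

lemma units_red: "pos_units (red B \<Phi>) = {j. \<exists>S. ({j}, S) \<in> set \<Phi> \<and> j \<notin> B \<and> S \<subseteq> B}"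
  unfolding pos_units_def mem_red by auto

lemma kill_red: "({}, {i}) \<in> set (red B \<Phi>) \<longleftrightarrow> (\<exists>S. ({}, S) \<in> set \<Phi> \<and> S - B = {i})"
  unfolding mem_red by auto

definition U :: "clause list \<Rightarrow> nat set \<Rightarrow> nat set" where
  "U \<Phi> B = pos_units (red B \<Phi>)"

definition kl :: "clause list \<Rightarrow> nat set \<Rightarrow> nat \<Rightarrow> bool" where
  "kl \<Phi> B i \<longleftrightarrow> ({}, {i}) \<in> set (red B \<Phi>)"

lemma finite_U: "finite (U \<Phi> B)" unfolding U_def by (rule finite_pos_units)

lemma U_disj: "i \<in> U \<Phi> B \<Longrightarrow> i \<notin> B" unfolding U_def units_red by auto

lemma U_sub: "set \<Phi> \<subseteq> HH n \<Longrightarrow> U \<Phi> B \<subseteq> {1..n}"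
  unfolding U_def units_red horn_clauses_def by auto

fun w :: "clause list \<Rightarrow> nat set \<Rightarrow> nat list \<Rightarrow> real" where
  "w \<Phi> B [] = 1"
| "w \<Phi> B (i # is) = (if i \<in> U \<Phi> B \<and> \<not> kl \<Phi> B i then 1 / card (U \<Phi> B) else 0) * w \<Phi> (insert i B) is"

lemma w_nonneg: "w \<Phi> B is \<ge> 0"
  by (induction "is" arbitrary: B) auto

definition L :: "nat \<Rightarrow> nat \<Rightarrow> nat list set" where
  "L n k = {xs. set xs \<subseteq> {1..n} \<and> length xs = k}"

lemma finite_L: "finite (L n k)"
  unfolding L_def by (rule finite_lists_length_eq) simp

lemma L_0: "L n 0 = {[]}" unfolding L_def by auto

lemma sum_L_Suc: "(\<Sum>xs\<in>L n (Suc k). f xs) = (\<Sum>i\<in>{1..n}. \<Sum>xs\<in>L n k. f (i # xs))"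
proof -
  have eq: "L n (Suc k) = (\<lambda>p. snd p # fst p) ` (L n k \<times> {1..n})"
    unfolding L_def lists_length_Suc_eq by (auto simp: image_iff)
  have "(\<Sum>xs\<in>L n (Suc k). f xs) = (\<Sum>p\<in>L n k \<times> {1..n}. f (snd p # fst p))"
    by (rule sum.reindex_cong[OF _ eq]) (auto simp: inj_on_def)
  also have "\<dots> = (\<Sum>xs\<in>L n k. \<Sum>i\<in>{1..n}. f (i # xs))"
    by (simp add: sum.cartesian_product case_prod_unfold)
  also have "\<dots> = (\<Sum>i\<in>{1..n}. \<Sum>xs\<in>L n k. f (i # xs))"
    by (rule sum.swap)
  finally show ?thesis .
qed

lemma pur_fst: "r \<in> set_pmf (pur t \<Psi>) \<Longrightarrow> fst r \<le> t"
proof (induction t \<Psi> arbitrary: r rule: pur.induct)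
  case (1 t \<Phi>)
  show ?case
  proof (cases "pos_units \<Phi> = {}")
    case True
    then show ?thesis using "1.prems" by (subst (asm) pur.simps) simp
  next
    case False
    then obtain i where i: "i \<in> pos_units \<Phi>" and
      r: "r \<in> set_pmf (if ({}, {i}) \<in> set \<Phi> then return_pmf (t, False) else pur (t - 1) (assign_true i \<Phi>))"
      using "1.prems" finite_pos_units by (subst (asm) pur.simps) auto
    show ?thesis
    proof (cases "({}, {i}) \<in> set \<Phi>")
      case True then show ?thesis using r by simp
    next
      case nk: False
      have "fst r \<le> t - 1"
        using "1.IH"[OF False _ nk] i r nk finite_pos_units False by simp
      then show ?thesis by simp
    qed
  qed
qed

lemma meas_if: "measure (measure_pmf (if b then p else q)) E = (if b then measure (measure_pmf p) E else measure (measure_pmf q) E)"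
  by simp

lemma pur_unfold:
  "measure (measure_pmf (pur t \<Psi>)) E =
    (if pos_units \<Psi> = {} then indicator E (t, True)
     else (\<Sum>i\<in>pos_units \<Psi>. (if ({}, {i}) \<in> set \<Psi> then indicator E (t, False)
        else measure (measure_pmf (pur (t - 1) (assign_true i \<Psi>))) E)) / card (pos_units \<Psi>))"
  apply (subst pur.simps)
  apply (simp add: measure_bind_pmf_of_set finite_pos_units meas_if)
  apply (intro impI sum.cong refl arg_cong2[where f="(/)"])
  apply auto
  done

lemma path:
  assumes "set \<Phi> \<subseteq> HH n" "\<And>r. r \<in> E \<Longrightarrow> fst r + k \<le> t"
  shows "measure (measure_pmf (pur t (red B \<Phi>))) E =
    (\<Sum>is\<in>L n k. w \<Phi> B is * measure (measure_pmf (pur (t - k) (red (B \<union> set is) \<Phi>))) E)"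
  using assms(2)
proof (induction k arbitrary: t B)
  case 0
  then show ?case by (simp add: L_0)
next
  case (Suc k)
  have t1: "\<And>b. (t, b) \<notin> E" using Suc.prems by fastforce
  have IH0: "measure (measure_pmf (pur (t - 1) (red (insert i B) \<Phi>))) E =
      (\<Sum>is\<in>L n k. w \<Phi> (insert i B) is * measure (measure_pmf (pur (t - 1 - k) (red (insert i B \<union> set is) \<Phi>))) E)" for i
    using Suc.prems by (intro Suc.IH) fastforce
  have IH: "measure (measure_pmf (pur (t - Suc 0) (red (insert i B) \<Phi>))) E =
      (\<Sum>is\<in>L n k. w \<Phi> (insert i B) is * measure (measure_pmf (pur (t - Suc k) (red (insert i (B \<union> set is)) \<Phi>))) E)" for i
    using IH0[of i] by simp
  let ?c = "\<lambda>i. (if i \<in> U \<Phi> B \<and> \<not> kl \<Phi> B i then 1 / card (U \<Phi> B) else 0)"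
  have "(\<Sum>is\<in>L n (Suc k). w \<Phi> B is * measure (measure_pmf (pur (t - Suc k) (red (B \<union> set is) \<Phi>))) E)
     = (\<Sum>i\<in>{1..n}. ?c i * (\<Sum>is\<in>L n k. w \<Phi> (insert i B) is * measure (measure_pmf (pur (t - 1 - k) (red (insert i B \<union> set is) \<Phi>))) E))"
    by (simp add: sum_L_Suc sum_distrib_left mult.assoc)
  also have "\<dots> = (\<Sum>i\<in>{1..n}. ?c i * measure (measure_pmf (pur (t - 1) (red (insert i B) \<Phi>))) E)"
    by (simp add: IH)
  also have "\<dots> = (\<Sum>i\<in>U \<Phi> B. ?c i * measure (measure_pmf (pur (t - 1) (red (insert i B) \<Phi>))) E)"
    using U_sub[OF assms(1), of B] by (intro sum.mono_neutral_right) auto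
  also have "\<dots> = measure (measure_pmf (pur t (red B \<Phi>))) E"
  proof (cases "U \<Phi> B = {}")
    case True
    then show ?thesis using t1 by (subst pur_unfold[of t]) (simp add: U_def)
  next
    case False
    have "measure (measure_pmf (pur t (red B \<Phi>))) E = (\<Sum>i\<in>U \<Phi> B. (if kl \<Phi> B i then 0
        else measure (measure_pmf (pur (t - 1) (red (insert i B) \<Phi>))) E)) / card (U \<Phi> B)"
      using False t1[of False] by (subst pur_unfold[of t]) (simp add: U_def kl_def assign_red indicator_def cong: if_cong)
    also have "\<dots> = (\<Sum>i\<in>U \<Phi> B. ?c i * measure (measure_pmf (pur (t - 1) (red (insert i B) \<Phi>))) E)"
      unfolding sum_divide_distrib by (intro sum.cong) auto
    finally show ?thesis by simp
  qed
  finally show ?case by simp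
qed

lemma Ex_mono:
  assumes "\<And>\<Phi>. set \<Phi> \<subseteq> HH n \<Longrightarrow> length \<Phi> = m \<Longrightarrow> f \<Phi> \<le> g \<Phi>"
  shows "EE n m f \<le> EE n m g"
  using assms
proof (induction m arbitrary: f g)
  case 0
  then show ?case by simp
next
  case (Suc m)
  have "(\<Sum>c\<in>HH n. EE n m (\<lambda>xs. f (c # xs))) \<le> (\<Sum>c\<in>HH n. EE n m (\<lambda>xs. g (c # xs)))"
    by (intro sum_mono Suc.IH) (auto intro!: Suc.prems)
  then show ?case by (simp add: divide_right_mono)
qed

lemma Ex_add: "EE n m (\<lambda>\<Phi>. f \<Phi> + g \<Phi>) = EE n m f + EE n m g"
  by (induction m arbitrary: f g) (simp_all add: sum.distrib add_divide_distrib)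

lemma Ex_cmult: "EE n m (\<lambda>\<Phi>. a * f \<Phi>) = a * EE n m f"
  by (induction m arbitrary: f) (simp_all add: sum_distrib_left)

lemma Ex_zero: "EE n m (\<lambda>\<Phi>. 0) = 0"
  apply (induction m) apply simp_all
  done

lemma Ex_sum: "finite I \<Longrightarrow> EE n m (\<lambda>\<Phi>. \<Sum>i\<in>I. f i \<Phi>) = (\<Sum>i\<in>I. EE n m (f i))"
  by (induction I rule: finite_induct) (simp_all add: Ex_add Ex_zero)

lemma Ex_const: "n \<ge> 1 \<Longrightarrow> EE n m (\<lambda>\<Phi>. a) = a"
  by (induction m) (use card_HH_pos in auto)

lemma Ex_nonneg: "(\<And>\<Phi>. set \<Phi> \<subseteq> HH n \<Longrightarrow> length \<Phi> = m \<Longrightarrow> f \<Phi> \<ge> 0) \<Longrightarrow> EE n m f \<ge> 0"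
  using Ex_mono[of n m "\<lambda>_. 0" f] Ex_zero by auto

lemma Ex_prod:
  "EE n m (\<lambda>\<Phi>. \<Prod>k<m. g k (\<Phi> ! k)) = (\<Prod>k<m. (\<Sum>c\<in>HH n. g k c) / card (HH n))"
proof (induction m arbitrary: g)
  case 0
  then show ?case by simp
next
  case (Suc m)
  have "EE n (Suc m) (\<lambda>\<Phi>. \<Prod>k<Suc m. g k (\<Phi> ! k)) =
     (\<Sum>c\<in>HH n. EE n m (\<lambda>xs. g 0 c * (\<Prod>k<m. g (Suc k) (xs ! k)))) / card (HH n)"
    by (simp only: EE.simps prod.lessThan_Suc_shift nth_Cons_0 nth_Cons_Suc)
  also have "\<dots> = (\<Sum>c\<in>HH n. g 0 c * (\<Prod>k<m. (\<Sum>c\<in>HH n. g (Suc k) c) / card (HH n))) / card (HH n)"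
    by (simp add: Ex_cmult Suc.IH[of "\<lambda>k. g (Suc k)"])
  also have "\<dots> = (\<Prod>k<Suc m. (\<Sum>c\<in>HH n. g k c) / card (HH n))"
    by (simp only: prod.lessThan_Suc_shift) (simp add: sum_distrib_right[symmetric] mult_ac)
  finally show ?case .
qed

lemma Ex_cond:
  fixes n m :: nat and R K :: "clause set" and F :: "clause list \<Rightarrow> real"
  assumes RK: "R \<inter> K = {}" and F: "\<And>xs. F xs \<ge> 0"
  defines "q \<equiv> real (card (K \<inter> HH n)) / card (HH n)"
  shows "EE n m (\<lambda>\<Phi>. F (filter (\<lambda>x. x \<in> R) \<Phi>) * (if set \<Phi> \<inter> K = {} then 1 else 0))
       \<le> EE n m (\<lambda>\<Phi>. F (filter (\<lambda>x. x \<in> R) \<Phi>) * (1 - q) ^ length (filter (\<lambda>x. x \<notin> R) \<Phi>))"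
  using F
proof (induction m arbitrary: F)
  case 0
  then show ?case by simp
next
  case (Suc m)
  define LHS where "LHS F = EE n m (\<lambda>\<Phi>. F (filter (\<lambda>x. x \<in> R) \<Phi>) * (if set \<Phi> \<inter> K = {} then 1 else 0))" for F
  define RHS where "RHS F = EE n m (\<lambda>\<Phi>. F (filter (\<lambda>x. x \<in> R) \<Phi>) * (1 - q) ^ length (filter (\<lambda>x. x \<notin> R) \<Phi>))" for F
  have fin: "finite (HH n)" by (rule finite_HH)
  have q01: "0 \<le> q" "q \<le> 1"
    unfolding q_def by (cases "card (HH n) = 0"; auto simp: card_mono finite_HH divide_le_eq_1)+
  have R0: "RHS F \<ge> 0"
    unfolding RHS_def using Suc.prems q01 by (intro Ex_nonneg) auto
  have c_in: "EE n m (\<lambda>xs. F (filter (\<lambda>x. x \<in> R) (c # xs)) * (if set (c # xs) \<inter> K = {} then 1 else 0))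
     \<le> EE n m (\<lambda>xs. F (filter (\<lambda>x. x \<in> R) (c # xs)) * (1 - q) ^ length (filter (\<lambda>x. x \<notin> R) (c # xs)))"
    if "c \<in> R" for c
  proof -
    have "c \<notin> K" using that RK by auto
    then show ?thesis using that Suc.IH[of "\<lambda>xs. F (c # xs)"] Suc.prems by simp
  qed
  have c_out: "EE n m (\<lambda>xs. F (filter (\<lambda>x. x \<in> R) (c # xs)) * (if set (c # xs) \<inter> K = {} then 1 else 0))
     = (if c \<in> K then 0 else LHS F)"
    "EE n m (\<lambda>xs. F (filter (\<lambda>x. x \<in> R) (c # xs)) * (1 - q) ^ length (filter (\<lambda>x. x \<notin> R) (c # xs)))
     = (1 - q) * RHS F"
    if "c \<notin> R" for c
    using that unfolding LHS_def RHS_def by (auto simp: Ex_zero Ex_cmult[symmetric] mult_ac)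
  have split: "HH n = (HH n \<inter> R) \<union> (HH n - R)" by auto
  have "(\<Sum>c\<in>HH n. EE n m (\<lambda>xs. F (filter (\<lambda>x. x \<in> R) (c # xs)) * (if set (c # xs) \<inter> K = {} then 1 else 0)))
     = (\<Sum>c\<in>HH n \<inter> R. EE n m (\<lambda>xs. F (filter (\<lambda>x. x \<in> R) (c # xs)) * (if set (c # xs) \<inter> K = {} then 1 else 0)))
     + (\<Sum>c\<in>HH n - R. EE n m (\<lambda>xs. F (filter (\<lambda>x. x \<in> R) (c # xs)) * (if set (c # xs) \<inter> K = {} then 1 else 0)))"
    by (subst split, rule sum.union_disjoint) (auto simp: fin)
  also have "\<dots> \<le> (\<Sum>c\<in>HH n \<inter> R. EE n m (\<lambda>xs. F (filter (\<lambda>x. x \<in> R) (c # xs)) * (1 - q) ^ length (filter (\<lambda>x. x \<notin> R) (c # xs))))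
     + (\<Sum>c\<in>HH n - R. EE n m (\<lambda>xs. F (filter (\<lambda>x. x \<in> R) (c # xs)) * (1 - q) ^ length (filter (\<lambda>x. x \<notin> R) (c # xs))))"
  proof -
    have A1: "(\<Sum>c\<in>HH n \<inter> R. EE n m (\<lambda>xs. F (filter (\<lambda>x. x \<in> R) (c # xs)) * (if set (c # xs) \<inter> K = {} then 1 else 0)))
      \<le> (\<Sum>c\<in>HH n \<inter> R. EE n m (\<lambda>xs. F (filter (\<lambda>x. x \<in> R) (c # xs)) * (1 - q) ^ length (filter (\<lambda>x. x \<notin> R) (c # xs))))"
      by (intro sum_mono c_in) auto
    have "(\<Sum>c\<in>HH n - R. EE n m (\<lambda>xs. F (filter (\<lambda>x. x \<in> R) (c # xs)) * (if set (c # xs) \<inter> K = {} then 1 else 0)))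
        = (\<Sum>c\<in>HH n - R. if c \<in> K then 0 else LHS F)" by (intro sum.cong refl c_out(1)) auto
    also have "\<dots> = card (HH n - R - K) * LHS F"
      by (simp add: sum.If_cases fin Diff_eq Int_ac)
    also have "\<dots> \<le> card (HH n - R - K) * RHS F"
      unfolding LHS_def RHS_def by (intro mult_left_mono Suc.IH Suc.prems) auto
    also have "\<dots> \<le> card (HH n - R) * (1 - q) * RHS F"
    proof (intro mult_right_mono R0)
      have e: "card (HH n - R - K) = card (HH n - R) - card (K \<inter> HH n)"
        using RK by (subst card_Diff_subset[symmetric]) (auto simp: fin intro!: arg_cong[where f=card])
      have le: "card (K \<inter> HH n) \<le> card (HH n - R)" using RK by (intro card_mono) (auto simp: fin)
      have le2: "card (HH n - R) \<le> card (HH n)" by (intro card_mono) (auto simp: fin)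
      show "real (card (HH n - R - K)) \<le> real (card (HH n - R)) * (1 - q)"
      proof -
        have "real (card (HH n - R)) * (real (card (K \<inter> HH n)) / card (HH n)) \<le> real (card (K \<inter> HH n))"
        proof (cases "card (HH n) = 0")
          case True then show ?thesis by simp
        next
          case False
          then show ?thesis using le2 by (simp add: field_simps mult_right_mono)
        qed
        then show ?thesis using le unfolding e q_def by (simp add: of_nat_diff algebra_simps)
      qed
    qed
    also have "\<dots> = (\<Sum>c\<in>HH n - R. EE n m (\<lambda>xs. F (filter (\<lambda>x. x \<in> R) (c # xs)) * (1 - q) ^ length (filter (\<lambda>x. x \<notin> R) (c # xs))))"
    proof -
      have "(\<Sum>c\<in>HH n - R. EE n m (\<lambda>xs. F (filter (\<lambda>x. x \<in> R) (c # xs)) * (1 - q) ^ length (filter (\<lambda>x. x \<notin> R) (c # xs))))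
         = (\<Sum>c\<in>HH n - R. (1 - q) * RHS F)" by (intro sum.cong refl c_out(2)) auto
      then show ?thesis by (simp only: sum_constant)
    qed
    finally have A2: "(\<Sum>c\<in>HH n - R. EE n m (\<lambda>xs. F (filter (\<lambda>x. x \<in> R) (c # xs)) * (if set (c # xs) \<inter> K = {} then 1 else 0)))
      \<le> (\<Sum>c\<in>HH n - R. EE n m (\<lambda>xs. F (filter (\<lambda>x. x \<in> R) (c # xs)) * (1 - q) ^ length (filter (\<lambda>x. x \<notin> R) (c # xs))))" .
    show ?thesis using add_mono[OF A1 A2] .
  qed
  also have "\<dots> = (\<Sum>c\<in>HH n. EE n m (\<lambda>xs. F (filter (\<lambda>x. x \<in> R) (c # xs)) * (1 - q) ^ length (filter (\<lambda>x. x \<notin> R) (c # xs))))"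
    by (subst (3) split, rule sum.union_disjoint[symmetric]) (auto simp: fin)
  finally show ?case by (simp add: divide_right_mono)
qed

lemma U_dep:
  assumes "\<And>x. snd x \<subseteq> B \<Longrightarrow> (x \<in> set \<Phi> \<longleftrightarrow> x \<in> set \<Phi>')"
  shows "U \<Phi> B = U \<Phi>' B"
  unfolding U_def units_red
proof (rule Collect_cong)
  fix j
  have "({j}, S) \<in> set \<Phi> \<longleftrightarrow> ({j}, S) \<in> set \<Phi>'" if "S \<subseteq> B" for S
    using assms[of "({j}, S)"] that by simp
  then show "(\<exists>S. ({j}, S) \<in> set \<Phi> \<and> j \<notin> B \<and> S \<subseteq> B) = (\<exists>S. ({j}, S) \<in> set \<Phi>' \<and> j \<notin> B \<and> S \<subseteq> B)"
    by blast
qed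

lemma kl_dep:
  assumes "\<And>x. fst x = {} \<Longrightarrow> snd x \<subseteq> insert i B \<Longrightarrow> (x \<in> set \<Phi> \<longleftrightarrow> x \<in> set \<Phi>')"
  shows "kl \<Phi> B i = kl \<Phi>' B i"
  unfolding kl_def kill_red
proof -
  have "({}, S) \<in> set \<Phi> \<longleftrightarrow> ({}, S) \<in> set \<Phi>'" if "S - B = {i}" for S
    using assms[of "({}, S)"] that by auto
  then show "(\<exists>S. ({}, S) \<in> set \<Phi> \<and> S - B = {i}) = (\<exists>S. ({}, S) \<in> set \<Phi>' \<and> S - B = {i})"
    by blast
qed

lemma w_dep:
  assumes "\<And>x. snd x \<subseteq> B \<union> set (butlast is) \<or> (fst x = {} \<and> snd x \<subseteq> B \<union> set is) \<Longrightarrow> (x \<in> set \<Phi> \<longleftrightarrow> x \<in> set \<Phi>')"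
  shows "w \<Phi> B is = w \<Phi>' B is"
  using assms
proof (induction "is" arbitrary: B)
  case Nil
  then show ?case by simp
next
  case (Cons i "is")
  have U: "U \<Phi> B = U \<Phi>' B"
    by (rule U_dep) (rule Cons.prems, auto)
  have K: "kl \<Phi> B i = kl \<Phi>' B i"
    by (rule kl_dep) (rule Cons.prems, auto)
  have W: "w \<Phi> (insert i B) is = w \<Phi>' (insert i B) is"
  proof (cases "is = []")
    case True then show ?thesis by simp
  next
    case False
    show ?thesis
      by (rule Cons.IH) (rule Cons.prems, use False in auto)
  qed
  show ?case using U K W by simp
qed

lemma w_snoc:
  "w \<Phi> C (xs @ [l]) = w \<Phi> C xs *
     (if l \<in> U \<Phi> (C \<union> set xs) \<and> \<not> kl \<Phi> (C \<union> set xs) l then 1 / card (U \<Phi> (C \<union> set xs)) else 0)"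
  by (induction xs arbitrary: C) auto

lemma w_nz: "w \<Phi> C is \<noteq> 0 \<Longrightarrow> distinct is \<and> set is \<inter> C = {}"
proof (induction "is" arbitrary: C)
  case Nil
  then show ?case by simp
next
  case (Cons i "is")
  then have i: "i \<in> U \<Phi> C" and r: "w \<Phi> (insert i C) is \<noteq> 0" by (auto split: if_splits)
  from Cons.IH[OF r] U_disj[OF i] show ?case by auto
qed

definition \<rho> :: "clause list \<Rightarrow> nat set \<Rightarrow> real" where
  "\<rho> \<Phi> A = (if U \<Phi> A = {} then 0 else card {i \<in> U \<Phi> A. kl \<Phi> A i} / card (U \<Phi> A))"

lemma stage_reach:
  "measure (measure_pmf (pur s \<Psi>)) {r. fst r \<le> s} = 1"
proof -
  have "AE r in measure_pmf (pur s \<Psi>). r \<in> {r. fst r \<le> s}"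
    using pur_fst by (auto simp: AE_measure_pmf_iff)
  then show ?thesis by (subst measure_pmf.prob_eq_1) auto
qed

lemma stage_rej:
  assumes "s \<ge> 1"
  shows "measure (measure_pmf (pur s \<Psi>)) {r. fst r = s \<and> \<not> snd r} =
    (if pos_units \<Psi> = {} then 0 else card {i \<in> pos_units \<Psi>. ({}, {i}) \<in> set \<Psi>} / card (pos_units \<Psi>))"
proof -
  have z: "measure (measure_pmf (pur (s - Suc 0) \<Psi>')) {r. fst r = s \<and> \<not> snd r} = 0" for \<Psi>'
    using pur_fst[of _ "s - Suc 0" \<Psi>'] assms by (subst measure_pmf_zero_iff) force
  show ?thesis
    apply (subst pur_unfold)
    apply (simp add: z indicator_def cong: if_cong)
    apply (simp add: sum.If_cases finite_pos_units Int_def)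
    done
qed

lemma reach_formula:
  assumes "set \<Phi> \<subseteq> HH n" "s \<le> n"
  shows "measure (measure_pmf (pur n \<Phi>)) {r. fst r \<le> s} = (\<Sum>is\<in>L n (n - s). w \<Phi> {} is)"
  using path[OF assms(1), of "{r. fst r \<le> s}" "n - s" n "{}"] assms(2)
  by (simp add: stage_reach)

lemma rej_formula:
  assumes "set \<Phi> \<subseteq> HH n" "s \<le> n" "s \<ge> 1"
  shows "measure (measure_pmf (pur n \<Phi>)) {r. fst r = s \<and> \<not> snd r} = (\<Sum>is\<in>L n (n - s). w \<Phi> {} is * \<rho> \<Phi> (set is))"
  unfolding \<rho>_def U_def kl_def
  using path[OF assms(1), of "{r. fst r = s \<and> \<not> snd r}" "n - s" n "{}"] assms(2)
  by (simp add: stage_rej[OF assms(3)])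

lemma sum_w_le1:
  assumes "set \<Phi> \<subseteq> HH n" "s \<le> n"
  shows "(\<Sum>is\<in>L n (n - s). w \<Phi> {} is) \<le> 1"
  using reach_formula[OF assms] by (metis measure_pmf.prob_le_1)

definition out :: "nat set \<Rightarrow> clause list \<Rightarrow> nat" where
  "out A \<Phi> = length (filter (\<lambda>x. \<not> snd x \<subseteq> A) \<Phi>)"

lemma card_img_insert:
  assumes "finite B" "l \<notin> B"
  shows "card ((\<lambda>T. (P, insert l T)) ` Pow B) = 2 ^ card B"
proof -
  have "inj_on (\<lambda>T. (P, insert l T)) (Pow B)"
    using assms(2) unfolding inj_on_def by (auto simp: insert_ident)
  then show ?thesis using assms by (simp add: card_image card_Pow)
qed

lemma length_filter_mono: "(\<And>x. P x \<Longrightarrow> Q x) \<Longrightarrow> length (filter P xs) \<le> length (filter Q xs)"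
  by (induction xs) auto

lemma cond_apply:
  fixes R K :: "clause set" and F :: "clause list \<Rightarrow> real" and f :: "clause list \<Rightarrow> real"
  assumes RK: "R \<inter> K = {}" and F: "\<And>xs. F xs \<ge> 0"
    and fF: "\<And>\<Phi>. f \<Phi> = F (filter (\<lambda>x. x \<in> R) \<Phi>)"
    and KH: "K \<subseteq> HH n" and cardK: "card K \<ge> c"
    and R2: "\<And>x. \<not> snd x \<subseteq> A \<Longrightarrow> x \<notin> R"
    and b: "b = 1 - real c / card (HH n)"
    and cN: "c \<le> card (HH n)"
  shows "EE n m (\<lambda>\<Phi>. f \<Phi> * (if set \<Phi> \<inter> K = {} then 1 else 0)) \<le> EE n m (\<lambda>\<Phi>. f \<Phi> * b ^ out A \<Phi>)"
proof -
  define q where "q = real (card (K \<inter> HH n)) / card (HH n)"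
  have KK: "K \<inter> HH n = K" using KH by auto
  have "EE n m (\<lambda>\<Phi>. f \<Phi> * (if set \<Phi> \<inter> K = {} then 1 else 0))
     \<le> EE n m (\<lambda>\<Phi>. F (filter (\<lambda>x. x \<in> R) \<Phi>) * (1 - q) ^ length (filter (\<lambda>x. x \<notin> R) \<Phi>))"
    unfolding fF q_def by (rule Ex_cond[OF RK F])
  also have "\<dots> \<le> EE n m (\<lambda>\<Phi>. f \<Phi> * b ^ out A \<Phi>)"
  proof (rule Ex_mono)
    fix \<Phi> :: "clause list"
    have KN: "card K \<le> card (HH n)" using card_mono[OF finite_HH KH] .
    have q1: "1 - q \<le> b" "0 \<le> 1 - q"
      unfolding b q_def KK using cardK KN
      by (auto intro!: divide_right_mono simp: divide_le_eq_1)
    have b01: "0 \<le> b" "b \<le> 1" unfolding b using cN by (auto simp: divide_le_eq_1)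
    have le: "out A \<Phi> \<le> length (filter (\<lambda>x. x \<notin> R) \<Phi>)"
      unfolding out_def by (rule length_filter_mono) (use R2 in auto)
    have "(1 - q) ^ length (filter (\<lambda>x. x \<notin> R) \<Phi>) \<le> b ^ length (filter (\<lambda>x. x \<notin> R) \<Phi>)"
      by (rule power_mono[OF q1])
    also have "\<dots> \<le> b ^ out A \<Phi>" by (rule power_decreasing[OF le b01])
    finally show "F (filter (\<lambda>x. x \<in> R) \<Phi>) * (1 - q) ^ length (filter (\<lambda>x. x \<notin> R) \<Phi>) \<le> f \<Phi> * b ^ out A \<Phi>"
      unfolding fF by (intro mult_left_mono F)
  qed
  finally show ?thesis .
qed

lemma card_split_filter: "finite V \<Longrightarrow> card {i \<in> V. P i} + card {i \<in> V. \<not> P i} = card V"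
proof -
  assume f: "finite V"
  have "V = {i \<in> V. P i} \<union> {i \<in> V. \<not> P i}" by auto
  then have "card V = card ({i \<in> V. P i} \<union> {i \<in> V. \<not> P i})" by simp
  also have "\<dots> = card {i \<in> V. P i} + card {i \<in> V. \<not> P i}"
    using f by (intro card_Un_disjoint) auto
  finally show ?thesis by simp
qed

lemma sum_ind_le1:
  assumes "finite I" "finite V"
  shows "(\<Sum>i\<in>I. (if i \<in> V then 1 / real (card V) else 0)) \<le> 1"
proof -
  have "(\<Sum>i\<in>I. (if i \<in> V then 1 / real (card V) else 0)) = card (I \<inter> V) / card V"
    using assms(1) by (simp add: sum.If_cases Int_def)
  also have "\<dots> \<le> 1"
    using card_mono[OF assms(2), of "I \<inter> V"] by (cases "card V = 0") (auto simp: divide_le_eq_1)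
  finally show ?thesis .
qed

lemma card_HH_ge: "n \<ge> 1 \<Longrightarrow> 2 ^ n \<le> card (HH n)"
proof -
  assume n1: "n \<ge> 1"
  have h: "n * 2 ^ n \<ge> (1::nat)" using n1 by (simp add: Suc_le_eq)
  have e: "(n + 1) * 2 ^ n - 1 = 2 ^ n + n * 2 ^ n - (1::nat)" by (simp add: algebra_simps)
  show ?thesis unfolding card_HH e using h by linarith
qed

lemma pointwise:
  assumes "set \<Phi> \<subseteq> HH n" "A \<subseteq> {1..n}" "l \<in> A" "B \<subseteq> A" "j \<in> {1..n} - A"
  defines "G \<equiv> (\<lambda>T. ({j}, insert l T)) ` Pow B"
  shows "1 - \<rho> \<Phi> A \<le> (if set \<Phi> \<inter> G = {} then 1 else 0) +
     (\<Sum>i\<in>{1..n} - A. (if i \<in> U \<Phi> A then 1 / card (U \<Phi> A) else 0) *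
         (if set \<Phi> \<inter> (\<lambda>T. ({}, insert i T)) ` Pow A = {} then 1 else 0))"
    (is "_ \<le> ?g + ?S")
proof -
  have S0: "?S \<ge> 0" by (intro sum_nonneg) auto
  show ?thesis
  proof (cases "U \<Phi> A = {}")
    case True
    have "set \<Phi> \<inter> G = {}"
    proof (rule ccontr)
      assume "set \<Phi> \<inter> G \<noteq> {}"
      then obtain T where T: "T \<subseteq> B" "({j}, insert l T) \<in> set \<Phi>" unfolding G_def by auto
      then have "j \<in> U \<Phi> A" unfolding U_def units_red using assms by (auto intro!: exI[of _ "insert l T"])
      then show False using True by simp
    qed
    then show ?thesis using True S0 by (simp add: \<rho>_def)
  next
    case False
    let ?U = "U \<Phi> A"
    have fU: "finite ?U" by (rule finite_U)
    have cU: "card ?U > 0" using False fU by (simp add: card_gt_0_iff)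
    have "1 - \<rho> \<Phi> A = card {i \<in> ?U. \<not> kl \<Phi> A i} / card ?U"
      using card_split_filter[OF fU, of "kl \<Phi> A"] False cU
      by (simp add: \<rho>_def field_simps)
    also have "\<dots> = (\<Sum>i\<in>{i \<in> ?U. \<not> kl \<Phi> A i}. (if i \<in> ?U then 1 / card ?U else 0) *
         (if set \<Phi> \<inter> (\<lambda>T. ({}, insert i T)) ` Pow A = {} then 1 else 0))"
    proof -
      have "(if set \<Phi> \<inter> (\<lambda>T. ({}, insert i T)) ` Pow A = {} then 1 else 0) = (1::real)"
        if "i \<in> ?U" "\<not> kl \<Phi> A i" for i
      proof -
        have iA: "i \<notin> A" using U_disj[OF that(1)] .
        have "set \<Phi> \<inter> (\<lambda>T. ({}, insert i T)) ` Pow A = {}"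
        proof (rule ccontr)
          assume "set \<Phi> \<inter> (\<lambda>T. ({}, insert i T)) ` Pow A \<noteq> {}"
          then obtain T where "T \<subseteq> A" "({}, insert i T) \<in> set \<Phi>" by auto
          then have "kl \<Phi> A i" unfolding kl_def kill_red using iA by (intro exI[of _ "insert i T"]) auto
          then show False using that by simp
        qed
        then show ?thesis by simp
      qed
      then show ?thesis by (simp add: sum.cong)
    qed
    also have "\<dots> \<le> ?S"
    proof (rule sum_mono2)
      show "{i \<in> ?U. \<not> kl \<Phi> A i} \<subseteq> {1..n} - A"
        using U_sub[OF assms(1), of A] U_disj by blast
    qed auto
    finally show ?thesis by simp
  qed
qed

lemma key_is:
  assumes n1: "n \<ge> 1" and s1: "1 \<le> s" and sn: "s < n" and isL: "is \<in> L n (n - s)"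
  defines "\<beta> \<equiv> 1 - 2 ^ (n - s - 1) / real (card (HH n))"
  shows "EE n m (\<lambda>\<Phi>. w \<Phi> {} is * (1 - \<rho> \<Phi> (set is))) \<le> 2 * EE n m (\<lambda>\<Phi>. w \<Phi> {} is * \<beta> ^ out (set is) \<Phi>)"
proof -
  define k where "k = n - s"
  have k1: "k \<ge> 1" "k < n" using s1 sn unfolding k_def by auto
  have cN: "2 ^ k \<le> card (HH n)"
    using order_trans[OF power_increasing[of k n "2::nat"] card_HH_ge[OF n1]] k1 by simp
  have cN': "2 ^ (k - 1) \<le> card (HH n)"
    using order_trans[OF power_increasing[of "k - 1" k "2::nat"] cN] by simp
  have b01: "0 \<le> \<beta>" "\<beta> \<le> 1"
    unfolding \<beta>_def k_def[symmetric] using cN' by (auto simp: divide_le_eq_1)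
  have R0: "0 \<le> EE n m (\<lambda>\<Phi>. w \<Phi> {} is * \<beta> ^ out (set is) \<Phi>)"
    by (intro Ex_nonneg mult_nonneg_nonneg w_nonneg zero_le_power b01)
  show ?thesis
  proof (cases "distinct is")
    case False
    have "w \<Phi> {} is = 0" for \<Phi> using w_nz False by blast
    then have "EE n m (\<lambda>\<Phi>. w \<Phi> {} is * (1 - \<rho> \<Phi> (set is))) = 0" by (simp add: Ex_zero)
    then show ?thesis using R0 by simp
  next
    case True
    have lenis: "length is = k" and setis: "set is \<subseteq> {1..n}" using isL unfolding L_def k_def by auto
    then have "is \<noteq> []" using k1 by auto
    then obtain xs l where isd: "is = xs @ [l]" by (metis append_butlast_last_id)
    define B where "B = set xs"
    define A where "A = set is"
    have AB: "A = insert l B" unfolding A_def B_def isd by auto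
    have lB: "l \<notin> B" using True unfolding isd B_def by auto
    have cB: "card B = k - 1" using True lenis unfolding B_def isd by (simp add: distinct_card)
    have cA: "card A = k" using True lenis unfolding A_def by (simp add: distinct_card)
    have An: "A \<subseteq> {1..n}" using setis unfolding A_def .
    have fB: "finite B" unfolding B_def by simp
    have "card A < card {1..n}" using cA k1 by simp
    have "{1..n} - A \<noteq> {}"
    proof
      assume "{1..n} - A = {}"
      then have "{1..n} \<subseteq> A" by auto
      then have "card {1..n} \<le> card A" using An by (intro card_mono) (auto intro: finite_subset)
      with \<open>card A < card {1..n}\<close> show False by simp
    qed
    then obtain j where j: "j \<in> {1..n} - A" by blast
    define G where "G = (\<lambda>T. ({j}, insert l T)) ` Pow B"
    define K where "K i = (\<lambda>T. ({}::nat set, insert i T)) ` Pow A" for i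
    define R1 where "R1 = {x::clause. snd x \<subseteq> B \<or> (fst x = {} \<and> snd x \<subseteq> A)}"
    define R2 where "R2 = {x::clause. snd x \<subseteq> A}"
    define F where "F i \<Phi> = w \<Phi> {} is * (if i \<in> U \<Phi> A then 1 / real (card (U \<Phi> A)) else 0)" for i \<Phi>
    have bl: "butlast is = xs" unfolding isd by simp
    have wdep1: "w \<Phi> {} is = w (filter (\<lambda>x. x \<in> R1) \<Phi>) {} is" for \<Phi>
      by (rule w_dep) (auto simp: R1_def bl B_def A_def)
    have wdep2: "w \<Phi> {} is = w (filter (\<lambda>x. x \<in> R2) \<Phi>) {} is" for \<Phi>
      by (rule w_dep) (auto simp: R2_def bl A_def isd)
    have Udep2: "U \<Phi> A = U (filter (\<lambda>x. x \<in> R2) \<Phi>) A" for \<Phi>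
      by (rule U_dep) (auto simp: R2_def)
    have Fdep: "F i \<Phi> = F i (filter (\<lambda>x. x \<in> R2) \<Phi>)" for i \<Phi>
      unfolding F_def using wdep2 Udep2 by metis
    have pw: "w \<Phi> {} is * (1 - \<rho> \<Phi> A) \<le> w \<Phi> {} is * (if set \<Phi> \<inter> G = {} then 1 else 0) +
       (\<Sum>i\<in>{1..n} - A. F i \<Phi> * (if set \<Phi> \<inter> K i = {} then 1 else 0))"
      if "set \<Phi> \<subseteq> HH n" for \<Phi>
    proof -
      have "w \<Phi> {} is * (1 - \<rho> \<Phi> A) \<le> w \<Phi> {} is * ((if set \<Phi> \<inter> G = {} then 1 else 0) +
         (\<Sum>i\<in>{1..n} - A. (if i \<in> U \<Phi> A then 1 / card (U \<Phi> A) else 0) *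
         (if set \<Phi> \<inter> K i = {} then 1 else 0)))"
        unfolding G_def K_def
        by (intro mult_left_mono w_nonneg pointwise[OF that An]) (use AB j in auto)
      then show ?thesis by (simp add: F_def distrib_left sum_distrib_left mult_ac)
    qed
    have step1: "EE n m (\<lambda>\<Phi>. w \<Phi> {} is * (1 - \<rho> \<Phi> A)) \<le>
        EE n m (\<lambda>\<Phi>. w \<Phi> {} is * (if set \<Phi> \<inter> G = {} then 1 else 0)) +
        (\<Sum>i\<in>{1..n} - A. EE n m (\<lambda>\<Phi>. F i \<Phi> * (if set \<Phi> \<inter> K i = {} then 1 else 0)))"
      using Ex_mono[of n m _ "\<lambda>\<Phi>. w \<Phi> {} is * (if set \<Phi> \<inter> G = {} then 1 else 0) +
       (\<Sum>i\<in>{1..n} - A. F i \<Phi> * (if set \<Phi> \<inter> K i = {} then 1 else 0))", OF pw]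
      by (simp add: Ex_add Ex_sum)
    have bdef: "\<beta> = 1 - real (2 ^ (k - 1)) / card (HH n)" unfolding \<beta>_def k_def by simp
    have step2: "EE n m (\<lambda>\<Phi>. w \<Phi> {} is * (if set \<Phi> \<inter> G = {} then 1 else 0)) \<le>
        EE n m (\<lambda>\<Phi>. w \<Phi> {} is * \<beta> ^ out A \<Phi>)"
    proof (rule cond_apply[where R = R1 and F = "\<lambda>xs. w xs {} is" and c = "2 ^ (k - 1)"])
      show "R1 \<inter> G = {}" unfolding R1_def G_def using lB by auto
      show "G \<subseteq> HH n" unfolding G_def horn_clauses_def using j An AB by auto
      show "2 ^ (k - 1) \<le> card G" unfolding G_def using card_img_insert[OF fB lB, of "{j}"] cB by simp
    qed (use wdep1 w_nonneg bdef cN' in \<open>auto simp: R1_def AB\<close>)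
    have step3: "EE n m (\<lambda>\<Phi>. F i \<Phi> * (if set \<Phi> \<inter> K i = {} then 1 else 0)) \<le>
        EE n m (\<lambda>\<Phi>. F i \<Phi> * \<beta> ^ out A \<Phi>)" if i: "i \<in> {1..n} - A" for i
    proof (rule cond_apply[where R = R2 and F = "F i" and c = "2 ^ (k - 1)"])
      show "R2 \<inter> K i = {}" unfolding R2_def K_def using i by auto
      show "K i \<subseteq> HH n" unfolding K_def horn_clauses_def using i An by auto
      have "card (K i) = 2 ^ k" unfolding K_def using card_img_insert[of A i "{}"] i cA An
        by (simp add: finite_subset)
      then show "2 ^ (k - 1) \<le> card (K i)" by simp
      show "F i xs \<ge> 0" for xs unfolding F_def by (intro mult_nonneg_nonneg w_nonneg) auto
    qed (use Fdep bdef cN' in \<open>auto simp: R2_def\<close>)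
    have step4: "(\<Sum>i\<in>{1..n} - A. EE n m (\<lambda>\<Phi>. F i \<Phi> * \<beta> ^ out A \<Phi>)) \<le> EE n m (\<lambda>\<Phi>. w \<Phi> {} is * \<beta> ^ out A \<Phi>)"
    proof -
      have "(\<Sum>i\<in>{1..n} - A. EE n m (\<lambda>\<Phi>. F i \<Phi> * \<beta> ^ out A \<Phi>)) = EE n m (\<lambda>\<Phi>. \<Sum>i\<in>{1..n} - A. F i \<Phi> * \<beta> ^ out A \<Phi>)"
        by (simp add: Ex_sum)
      also have "\<dots> \<le> EE n m (\<lambda>\<Phi>. w \<Phi> {} is * \<beta> ^ out A \<Phi>)"
      proof (rule Ex_mono)
        fix \<Phi> :: "clause list"
        have "(\<Sum>i\<in>{1..n} - A. F i \<Phi> * \<beta> ^ out A \<Phi>) = (w \<Phi> {} is * \<beta> ^ out A \<Phi>) *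
            (\<Sum>i\<in>{1..n} - A. (if i \<in> U \<Phi> A then 1 / real (card (U \<Phi> A)) else 0))"
          unfolding F_def by (simp add: sum_distrib_left mult_ac)
        also have "\<dots> \<le> (w \<Phi> {} is * \<beta> ^ out A \<Phi>) * 1"
          by (intro mult_left_mono sum_ind_le1 mult_nonneg_nonneg w_nonneg zero_le_power b01 finite_U) auto
        finally show "(\<Sum>i\<in>{1..n} - A. F i \<Phi> * \<beta> ^ out A \<Phi>) \<le> w \<Phi> {} is * \<beta> ^ out A \<Phi>" by simp
      qed
      finally show ?thesis .
    qed
    have "EE n m (\<lambda>\<Phi>. w \<Phi> {} is * (1 - \<rho> \<Phi> A)) \<le> EE n m (\<lambda>\<Phi>. w \<Phi> {} is * \<beta> ^ out A \<Phi>) +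
        EE n m (\<lambda>\<Phi>. w \<Phi> {} is * \<beta> ^ out A \<Phi>)"
      using step1 step2 step4 sum_mono[of "{1..n} - A" _ "\<lambda>i. EE n m (\<lambda>\<Phi>. F i \<Phi> * \<beta> ^ out A \<Phi>)", OF step3]
      by linarith
    then show ?thesis unfolding A_def by simp
  qed
qed

lemma Ex_cong: "(\<And>\<Phi>. set \<Phi> \<subseteq> HH n \<Longrightarrow> length \<Phi> = m \<Longrightarrow> f \<Phi> = g \<Phi>) \<Longrightarrow> EE n m f = EE n m g"
  using Ex_mono[of n m f g] Ex_mono[of n m g f] by force

definition bad :: "nat \<Rightarrow> nat \<Rightarrow> clause list \<Rightarrow> bool" where
  "bad n M \<Phi> \<longleftrightarrow> (\<exists>A. A \<subseteq> {1..n} \<and> card A < n \<and> out A \<Phi> < M)"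

lemma X_bound:
  assumes n1: "n \<ge> 1" and s1: "1 \<le> s" and sn: "s < n"
  defines "\<beta> \<equiv> 1 - 2 ^ (n - s - 1) / real (card (HH n))"
  shows "EE n m (\<lambda>\<Phi>. \<Sum>is\<in>L n (n - s). w \<Phi> {} is * (1 - \<rho> \<Phi> (set is)))
     \<le> 2 * \<beta> ^ M * EE n m (\<lambda>\<Phi>. \<Sum>is\<in>L n (n - s). w \<Phi> {} is) + 2 * EE n m (\<lambda>\<Phi>. if bad n M \<Phi> then 1 else 0)"
proof -
  have cN: "2 ^ (n - s - 1) \<le> card (HH n)"
    using order_trans[OF power_increasing[of "n - s - 1" n "2::nat"] card_HH_ge[OF n1]] by simp
  have b01: "0 \<le> \<beta>" "\<beta> \<le> 1"
    unfolding \<beta>_def using cN by (auto simp: divide_le_eq_1)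
  have "EE n m (\<lambda>\<Phi>. \<Sum>is\<in>L n (n - s). w \<Phi> {} is * (1 - \<rho> \<Phi> (set is)))
      = (\<Sum>is\<in>L n (n - s). EE n m (\<lambda>\<Phi>. w \<Phi> {} is * (1 - \<rho> \<Phi> (set is))))"
    by (simp add: Ex_sum finite_L)
  also have "\<dots> \<le> (\<Sum>is\<in>L n (n - s). 2 * EE n m (\<lambda>\<Phi>. w \<Phi> {} is * \<beta> ^ out (set is) \<Phi>))"
    unfolding \<beta>_def by (intro sum_mono key_is[OF n1 s1 sn])
  also have "\<dots> = 2 * EE n m (\<lambda>\<Phi>. \<Sum>is\<in>L n (n - s). w \<Phi> {} is * \<beta> ^ out (set is) \<Phi>)"
    by (simp add: Ex_sum finite_L sum_distrib_left)
  also have "\<dots> \<le> 2 * EE n m (\<lambda>\<Phi>. \<beta> ^ M * (\<Sum>is\<in>L n (n - s). w \<Phi> {} is) + (if bad n M \<Phi> then 1 else 0))"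
  proof (intro mult_left_mono Ex_mono)
    fix \<Phi> :: "clause list" assume \<Phi>: "set \<Phi> \<subseteq> HH n"
    have "w \<Phi> {} is * \<beta> ^ out (set is) \<Phi> \<le> \<beta> ^ M * w \<Phi> {} is + w \<Phi> {} is * (if bad n M \<Phi> then 1 else 0)"
      if "is \<in> L n (n - s)" for "is"
    proof (cases "out (set is) \<Phi> < M")
      case True
      have "bad n M \<Phi>" unfolding bad_def
      proof (intro exI conjI)
        show "set is \<subseteq> {1..n}" using that unfolding L_def by auto
        show "card (set is) < n" using that card_length[of "is"] s1 sn unfolding L_def by auto
      qed (rule True)
      moreover have "\<beta> ^ out (set is) \<Phi> \<le> 1" using b01 by (simp add: power_le_one)
      moreover have "w \<Phi> {} is * \<beta> ^ out (set is) \<Phi> \<le> w \<Phi> {} is"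
        using calculation(2) w_nonneg[of \<Phi> "{}" "is"] by (simp add: mult_left_le)
      moreover have "0 \<le> \<beta> ^ M * w \<Phi> {} is" using b01 w_nonneg[of \<Phi> "{}" "is"] by simp
      ultimately show ?thesis by simp
    next
      case False
      then have "\<beta> ^ out (set is) \<Phi> \<le> \<beta> ^ M" using b01 by (intro power_decreasing) auto
      then have "w \<Phi> {} is * \<beta> ^ out (set is) \<Phi> \<le> \<beta> ^ M * w \<Phi> {} is"
        using mult_right_mono[OF _ w_nonneg[of \<Phi> "{}" "is"]] by (metis mult.commute)
      moreover have "0 \<le> w \<Phi> {} is * (if bad n M \<Phi> then 1 else 0)" using w_nonneg[of \<Phi> "{}" "is"] by simp
      ultimately show ?thesis by linarith
    qed
    then have "(\<Sum>is\<in>L n (n - s). w \<Phi> {} is * \<beta> ^ out (set is) \<Phi>) \<le>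
        (\<Sum>is\<in>L n (n - s). \<beta> ^ M * w \<Phi> {} is + w \<Phi> {} is * (if bad n M \<Phi> then 1 else 0))"
      by (intro sum_mono)
    also have "\<dots> = \<beta> ^ M * (\<Sum>is\<in>L n (n - s). w \<Phi> {} is) + (\<Sum>is\<in>L n (n - s). w \<Phi> {} is) * (if bad n M \<Phi> then 1 else 0)"
      by (simp add: sum.distrib sum_distrib_left sum_distrib_right)
    also have "\<dots> \<le> \<beta> ^ M * (\<Sum>is\<in>L n (n - s). w \<Phi> {} is) + (if bad n M \<Phi> then 1 else 0)"
      using sum_w_le1[OF \<Phi>, of s] sn by auto
    finally show "(\<Sum>is\<in>L n (n - s). w \<Phi> {} is * \<beta> ^ out (set is) \<Phi>) \<le> \<beta> ^ M * (\<Sum>is\<in>L n (n - s). w \<Phi> {} is) + (if bad n M \<Phi> then 1 else 0)" .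
  qed simp
  also have "\<dots> = 2 * \<beta> ^ M * EE n m (\<lambda>\<Phi>. \<Sum>is\<in>L n (n - s). w \<Phi> {} is) + 2 * EE n m (\<lambda>\<Phi>. if bad n M \<Phi> then 1 else 0)"
    by (simp add: Ex_add Ex_cmult algebra_simps)
  finally show ?thesis .
qed

lemma pow_filter_prod:
  "(2::real) ^ length (filter P \<Phi>) = (\<Prod>k<length \<Phi>. (if P (\<Phi> ! k) then 2 else 1))"
  by (induction \<Phi>) (simp_all add: prod.lessThan_Suc_shift del: prod.lessThan_Suc)

lemma card_RA:
  assumes "A \<subseteq> {1..n}" "card A < n"
  shows "card {c \<in> HH n. snd c \<subseteq> A} \<le> (n + 1) * 2 ^ (n - 1)"
proof -
  have fA: "finite A" using assms(1) finite_subset by blast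
  have "{c \<in> HH n. snd c \<subseteq> A} \<subseteq> Ps n \<times> Pow A" unfolding HH_eq by auto
  then have "card {c \<in> HH n. snd c \<subseteq> A} \<le> card (Ps n \<times> Pow A)"
    by (intro card_mono) (auto simp: finite_Ps fA)
  also have "\<dots> = (n + 1) * 2 ^ card A" by (simp add: card_cartesian_product card_Ps card_Pow fA)
  also have "\<dots> \<le> (n + 1) * 2 ^ (n - 1)" using assms(2) by (intro mult_left_mono power_increasing) auto
  finally show ?thesis .
qed

lemma one_A_bound:
  assumes n1: "n \<ge> 1" and A: "A \<subseteq> {1..n}" "card A < n"
  shows "EE n m (\<lambda>\<Phi>. if out A \<Phi> < M then 1 else 0) \<le>
     ((card (HH n) + (n + 1) * 2 ^ (n - 1)) / card (HH n)) ^ m / 2 ^ (m - M)"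
proof -
  define h where "h c = (if snd c \<subseteq> A then 2 else (1::real))" for c :: clause
  have "EE n m (\<lambda>\<Phi>. if out A \<Phi> < M then 1 else 0) \<le> EE n m (\<lambda>\<Phi>. (1 / 2 ^ (m - M)) * (\<Prod>k<m. h (\<Phi> ! k)))"
  proof (rule Ex_mono)
    fix \<Phi> :: "clause list" assume len: "length \<Phi> = m"
    have e: "(\<Prod>k<m. h (\<Phi> ! k)) = 2 ^ length (filter (\<lambda>x. snd x \<subseteq> A) \<Phi>)"
      unfolding h_def pow_filter_prod len ..
    have sm: "length (filter (\<lambda>x. snd x \<subseteq> A) \<Phi>) + out A \<Phi> = m"
      unfolding out_def using sum_length_filter_compl[of "\<lambda>x. snd x \<subseteq> A" \<Phi>] len by simp
    show "(if out A \<Phi> < M then 1 else 0) \<le> (1 / 2 ^ (m - M)) * (\<Prod>k<m. h (\<Phi> ! k))"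
    proof (cases "out A \<Phi> < M")
      case True
      then have "m - M \<le> length (filter (\<lambda>x. snd x \<subseteq> A) \<Phi>)" using sm by linarith
      then have "(2::real) ^ (m - M) \<le> 2 ^ length (filter (\<lambda>x. snd x \<subseteq> A) \<Phi>)"
        by (intro power_increasing) auto
      then show ?thesis using True unfolding e by (simp add: field_simps)
    next
      case False
      then show ?thesis unfolding e by simp
    qed
  qed
  also have "\<dots> = (1 / 2 ^ (m - M)) * (\<Prod>k<m. (\<Sum>c\<in>HH n. h c) / card (HH n))"
    by (subst Ex_cmult) (simp add: Ex_prod[of n m "\<lambda>k. h"])
  also have "\<dots> \<le> (1 / 2 ^ (m - M)) * (\<Prod>k<m. (card (HH n) + (n + 1) * 2 ^ (n - 1)) / card (HH n))"
  proof (intro mult_left_mono prod_mono conjI)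
    fix k
    have "(\<Sum>c\<in>HH n. h c) = (\<Sum>c\<in>HH n. 1 + (if snd c \<subseteq> A then 1 else 0))"
      unfolding h_def by (intro sum.cong) auto
    also have "\<dots> = card (HH n) + card {c \<in> HH n. snd c \<subseteq> A}"
      by (simp add: sum.distrib sum.If_cases finite_HH Int_def)
    also have "\<dots> \<le> card (HH n) + (n + 1) * 2 ^ (n - 1)"
      using of_nat_mono[OF card_RA[OF A], where 'a=real] by simp
    finally have "(\<Sum>c\<in>HH n. h c) \<le> card (HH n) + (n + 1) * 2 ^ (n - 1)" .
    then show "(\<Sum>c\<in>HH n. h c) / card (HH n) \<le> (card (HH n) + (n + 1) * 2 ^ (n - 1)) / card (HH n)"
      by (intro divide_right_mono) auto
    show "0 \<le> (\<Sum>c\<in>HH n. h c) / card (HH n)" unfolding h_def by (intro divide_nonneg_nonneg sum_nonneg) auto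
  qed auto
  also have "\<dots> = ((card (HH n) + (n + 1) * 2 ^ (n - 1)) / card (HH n)) ^ m / 2 ^ (m - M)"
    by simp
  finally show ?thesis .
qed

lemma bad_bound:
  assumes n1: "n \<ge> 1"
  shows "EE n m (\<lambda>\<Phi>. if bad n M \<Phi> then 1 else 0) \<le>
     2 ^ n * (((card (HH n) + (n + 1) * 2 ^ (n - 1)) / card (HH n)) ^ m / 2 ^ (m - M))"
proof -
  define AA where "AA = {A. A \<subseteq> {1..n} \<and> card A < n}"
  define bd where "bd = ((card (HH n) + (n + 1) * 2 ^ (n - 1)) / card (HH n)) ^ m / 2 ^ (m - M)"
  have AAsub: "AA \<subseteq> Pow {1..n}" unfolding AA_def by auto
  have fAA: "finite AA" using AAsub finite_subset by blast
  have cAA: "card AA \<le> 2 ^ n" using card_mono[OF _ AAsub] by (simp add: card_Pow)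
  have "EE n m (\<lambda>\<Phi>. if bad n M \<Phi> then 1 else 0) \<le> EE n m (\<lambda>\<Phi>. \<Sum>A\<in>AA. if out A \<Phi> < M then 1 else 0)"
  proof (rule Ex_mono)
    fix \<Phi> :: "clause list"
    show "(if bad n M \<Phi> then 1 else 0) \<le> (\<Sum>A\<in>AA. if out A \<Phi> < M then 1 else (0::real))"
    proof (cases "bad n M \<Phi>")
      case True
      then obtain A where "A \<in> AA" "out A \<Phi> < M" unfolding bad_def AA_def by auto
      then have "(if out A \<Phi> < M then 1 else (0::real)) \<le> (\<Sum>A\<in>AA. if out A \<Phi> < M then 1 else 0)"
        by (intro member_le_sum fAA) auto
      then show ?thesis using True \<open>out A \<Phi> < M\<close> by simp
    next
      case False
      then show ?thesis by (simp add: sum_nonneg)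
    qed
  qed
  also have "\<dots> = (\<Sum>A\<in>AA. EE n m (\<lambda>\<Phi>. if out A \<Phi> < M then 1 else 0))"
    by (simp add: Ex_sum fAA)
  also have "\<dots> \<le> (\<Sum>A\<in>AA. bd)"
    unfolding bd_def by (intro sum_mono one_A_bound[OF n1]) (auto simp: AA_def)
  also have "\<dots> = card AA * bd" by simp
  also have "\<dots> \<le> 2 ^ n * bd"
    using cAA by (intro mult_right_mono) (auto simp: bd_def)
  finally show ?thesis unfolding bd_def .
qed

lemma good_run:
  assumes "set \<Phi> \<subseteq> HH n" "\<forall>x\<in>set \<Phi>. fst x \<noteq> {}" "\<forall>i\<in>{1..K}. ({i}, {}) \<in> set \<Phi>"
  shows "r \<in> set_pmf (pur t \<Psi>) \<Longrightarrow> \<Psi> = red B \<Phi> \<Longrightarrow> finite B \<Longrightarrow> t + card B = n \<Longrightarrow> fst r \<le> n - K"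
proof (induction t \<Psi> arbitrary: r B rule: pur.induct)
  case (1 t \<Psi>)
  show ?case
  proof (cases "t = 0")
    case True
    then show ?thesis using pur_fst[OF "1.prems"(1)] by simp
  next
    case t0: False
    show ?thesis
    proof (cases "pos_units \<Psi> = {}")
      case True
      then have r: "r = (t, True)" using "1.prems"(1) by (subst (asm) pur.simps) simp
      have "{1..K} \<subseteq> B"
      proof
        fix i assume i: "i \<in> {1..K}"
        show "i \<in> B"
        proof (rule ccontr)
          assume "i \<notin> B"
          then have "i \<in> pos_units (red B \<Phi>)" unfolding units_red using assms(3) i by auto
          then have "i \<in> pos_units \<Psi>" using "1.prems"(2) by simp
          then show False using True by simp
        qed
      qed
      then have "K \<le> card B" using card_mono[OF "1.prems"(3) \<open>{1..K} \<subseteq> B\<close>] by simp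
      then show ?thesis using r "1.prems"(4) by simp
    next
      case False
      then obtain i where i: "i \<in> pos_units \<Psi>" and
        r: "r \<in> set_pmf (if ({}, {i}) \<in> set \<Psi> then return_pmf (t, False) else pur (t - 1) (assign_true i \<Psi>))"
        using "1.prems"(1) finite_pos_units by (subst (asm) pur.simps) auto
      have nk: "({}, {i}) \<notin> set \<Psi>"
      proof
        assume "({}, {i}) \<in> set \<Psi>"
        then have "({}, {i}) \<in> set (red B \<Phi>)" using "1.prems"(2) by simp
        then obtain S where "({}, S) \<in> set \<Phi>" unfolding kill_red by blast
        then show False using assms(2) by fastforce
      qed
      have "i \<in> pos_units (red B \<Phi>)" using i "1.prems"(2) by simp
      then have iB: "i \<notin> B" unfolding units_red by auto
      have r': "r \<in> set_pmf (pur (t - 1) (assign_true i \<Psi>))"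
        using r nk by simp
      have ia: "assign_true i \<Psi> = red (insert i B) \<Phi>" using "1.prems"(2) assign_red by simp
      have i': "i \<in> set_pmf (pmf_of_set (pos_units \<Psi>))" using i False finite_pos_units by simp
      have fi: "finite (insert i B)" using "1.prems"(3) by simp
      have ct: "t - 1 + card (insert i B) = n" using "1.prems"(3,4) iB t0 by simp
      show ?thesis by (rule "1.IH"[OF False i' nk r' ia fi ct])
    qed
  qed
qed

lemma prod_if_split:
  assumes "k \<le> m"
  shows "(\<Prod>i<m. (if i < k then a else b)) = a ^ k * (b::real) ^ (m - k)"
proof -
  have "(\<Prod>i<m. (if i < k then a else b)) = (\<Prod>i\<in>{..<m} \<inter> {x. x < k}. a) * (\<Prod>i\<in>{..<m} \<inter> - {x. x < k}. b)"
    by (rule prod.If_cases) simp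
  also have "{..<m} \<inter> {x. x < k} = {..<k}" using assms by auto
  also have "{..<m} \<inter> - {x. x < k} = {k..<m}" by auto
  finally show ?thesis by simp
qed

lemma card_pos_clauses: "card {c \<in> HH n. fst c \<noteq> {}} = n * 2 ^ n"
proof -
  have "{c \<in> HH n. fst c \<noteq> {}} = ((\<lambda>i. {i}) ` {1..n}) \<times> Pow {1..n}"
    unfolding horn_clauses_def by auto
  moreover have "card ((\<lambda>i. {i::nat}) ` {1..n}) = n" by (subst card_image) (auto simp: inj_on_def)
  ultimately show ?thesis by (simp add: card_cartesian_product card_Pow)
qed

lemma lower:
  assumes n1: "n \<ge> 1" and sn: "s \<le> n" and km: "n - s \<le> m"
  shows "EE n m (\<lambda>\<Phi>. measure (measure_pmf (pur n \<Phi>)) {r. fst r \<le> s}) \<ge>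
    (1 / card (HH n)) ^ (n - s) * (real (n * 2 ^ n) / card (HH n)) ^ (m - (n - s))"
proof -
  define k where "k = n - s"
  define g where "g i c = (if i < k then (if c = ({Suc i}, {}) then 1 else 0) else (if fst c \<noteq> {} then 1 else (0::real)))"
    for i :: nat and c :: clause
  have g01: "0 \<le> g i c" "g i c \<le> 1" for i c unfolding g_def by auto
  have "EE n m (\<lambda>\<Phi>. \<Prod>i<m. g i (\<Phi> ! i)) \<le> EE n m (\<lambda>\<Phi>. measure (measure_pmf (pur n \<Phi>)) {r. fst r \<le> s})"
  proof (rule Ex_mono)
    fix \<Phi> :: "clause list" assume H: "set \<Phi> \<subseteq> HH n" and len: "length \<Phi> = m"
    show "(\<Prod>i<m. g i (\<Phi> ! i)) \<le> measure (measure_pmf (pur n \<Phi>)) {r. fst r \<le> s}"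
    proof (cases "(\<Prod>i<m. g i (\<Phi> ! i)) = 0")
      case True
      have "0 \<le> measure (measure_pmf (pur n \<Phi>)) {r. fst r \<le> s}" by (rule measure_nonneg)
      with True show ?thesis by linarith
    next
      case False
      then have nz: "g i (\<Phi> ! i) \<noteq> 0" if "i < m" for i using that by auto
      have pos: "\<forall>x\<in>set \<Phi>. fst x \<noteq> {}"
      proof
        fix x assume "x \<in> set \<Phi>"
        then obtain i where i: "i < m" "x = \<Phi> ! i" using len by (auto simp: in_set_conv_nth)
        show "fst x \<noteq> {}" using nz[OF i(1)] i(2) unfolding g_def by (auto split: if_splits)
      qed
      have units: "\<forall>j\<in>{1..k}. ({j}, {}) \<in> set \<Phi>"
      proof
        fix j assume j: "j \<in> {1..k}"
        then have "j - 1 < k" "j - 1 < m" using km unfolding k_def by auto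
        then have "\<Phi> ! (j - 1) = ({j}, {})" using nz[of "j - 1"] j unfolding g_def by (auto split: if_splits)
        then show "({j}, {}) \<in> set \<Phi>" using \<open>j - 1 < m\<close> len by (metis nth_mem)
      qed
      have fr: "fst r \<le> n - k" if "r \<in> set_pmf (pur n \<Phi>)" for r
        using good_run[OF H pos units that, of "{}"] by simp
      have "AE r in measure_pmf (pur n \<Phi>). r \<in> {r. fst r \<le> s}"
        using fr sn unfolding k_def by (auto simp: AE_measure_pmf_iff)
      then have "measure (measure_pmf (pur n \<Phi>)) {r. fst r \<le> s} = 1"
        by (subst measure_pmf.prob_eq_1) auto
      moreover have "(\<Prod>i<m. g i (\<Phi> ! i)) \<le> 1" using g01 by (intro prod_le_1) auto
      ultimately show ?thesis by simp
    qed
  qed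
  moreover have "EE n m (\<lambda>\<Phi>. \<Prod>i<m. g i (\<Phi> ! i)) = (\<Prod>i<m. (\<Sum>c\<in>HH n. g i c) / card (HH n))"
    by (rule Ex_prod)
  moreover have "(\<Prod>i<m. (\<Sum>c\<in>HH n. g i c) / card (HH n)) \<ge> (\<Prod>i<m. (if i < k then 1 / card (HH n) else real (n * 2 ^ n) / card (HH n)))"
  proof (intro prod_mono conjI)
    fix i assume "i \<in> {..<m}"
    show "0 \<le> (if i < k then 1 / real (card (HH n)) else real (n * 2 ^ n) / real (card (HH n)))" by simp
    show "(if i < k then 1 / real (card (HH n)) else real (n * 2 ^ n) / real (card (HH n))) \<le> (\<Sum>c\<in>HH n. g i c) / card (HH n)"
    proof (cases "i < k")
      case True
      then have mem: "({Suc i}, {}) \<in> HH n" unfolding horn_clauses_def k_def by auto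
      have "(\<Sum>c\<in>HH n. g i c) = (\<Sum>c\<in>HH n. if c = ({Suc i}, {}) then 1 else 0)"
        unfolding g_def using True by simp
      also have "\<dots> = 1" using mem finite_HH by (simp add: sum.delta)
      finally show ?thesis using True by simp
    next
      case False
      have "(\<Sum>c\<in>HH n. g i c) = (\<Sum>c\<in>HH n. if fst c \<noteq> {} then 1 else 0)"
        unfolding g_def using False by simp
      also have "\<dots> = card {c \<in> HH n. fst c \<noteq> {}}" by (simp add: sum.If_cases finite_HH Int_def)
      finally show ?thesis using False card_pos_clauses[of n] by simp
    qed
  qed
  moreover have "(\<Prod>i<m. (if i < k then 1 / card (HH n) else real (n * 2 ^ n) / card (HH n)))
      = (1 / card (HH n)) ^ k * (real (n * 2 ^ n) / card (HH n)) ^ (m - k)"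
    by (rule prod_if_split) (use km k_def in simp)
  ultimately show ?thesis unfolding k_def by linarith
qed

lemma rho_le1: "\<rho> \<Phi> A \<le> 1"
  unfolding \<rho>_def using card_mono[OF finite_U, of "{i \<in> U \<Phi> A. kl \<Phi> A i}" \<Phi> A]
  by (auto simp: divide_le_eq_1)

lemma cond_bound:
  assumes n1: "n \<ge> 1" and s1: "1 \<le> s" and sn: "s < n" and km: "n - s \<le> m"
  shows "\<bar>cond_prob (measure_pmf (pur_run n m)) (rejects_at_stage s) (reaches_stage s) - 1\<bar>
    \<le> 2 * (1 - 2 ^ (n - s - 1) / real (card (HH n))) ^ M +
       2 * (2 ^ n * (((card (HH n) + (n + 1) * 2 ^ (n - 1)) / card (HH n)) ^ m / 2 ^ (m - M))) /
       ((1 / card (HH n)) ^ (n - s) * (real (n * 2 ^ n) / card (HH n)) ^ (m - (n - s)))"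
proof -
  define Pr where "Pr = EE n m (\<lambda>\<Phi>. \<Sum>is\<in>L n (n - s). w \<Phi> {} is)"
  define Prr where "Prr = EE n m (\<lambda>\<Phi>. \<Sum>is\<in>L n (n - s). w \<Phi> {} is * \<rho> \<Phi> (set is))"
  define X where "X = EE n m (\<lambda>\<Phi>. \<Sum>is\<in>L n (n - s). w \<Phi> {} is * (1 - \<rho> \<Phi> (set is)))"
  define \<beta> where "\<beta> = 1 - 2 ^ (n - s - 1) / real (card (HH n))"
  define Pb where "Pb = 2 ^ n * (((card (HH n) + (n + 1) * 2 ^ (n - 1)) / card (HH n)) ^ m / 2 ^ (m - M))"
  define Lb where "Lb = (1 / card (HH n)) ^ (n - s) * (real (n * 2 ^ n) / card (HH n)) ^ (m - (n - s))"
  have N0: "card (HH n) > 0" using card_HH_pos[OF n1] .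
  have e1: "measure (measure_pmf (pur_run n m)) {r. fst r \<le> s} = Pr"
    unfolding pur_run_def Pr_def measure_formula_bind[OF n1]
    by (intro Ex_cong reach_formula) (use sn in auto)
  have e2: "measure (measure_pmf (pur_run n m)) {r. fst r = s \<and> \<not> snd r} = Prr"
    unfolding pur_run_def Prr_def measure_formula_bind[OF n1]
    by (intro Ex_cong rej_formula) (use sn s1 in auto)
  have C: "cond_prob (measure_pmf (pur_run n m)) (rejects_at_stage s) (reaches_stage s) = Prr / Pr"
  proof -
    have "{\<omega> \<in> space (measure_pmf (pur_run n m)). rejects_at_stage s \<omega> \<and> reaches_stage s \<omega>} = {r. fst r = s \<and> \<not> snd r}"
      unfolding rejects_at_stage_def reaches_stage_def by auto
    moreover have "{\<omega> \<in> space (measure_pmf (pur_run n m)). reaches_stage s \<omega>} = {r. fst r \<le> s}"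
      unfolding reaches_stage_def by auto
    ultimately show ?thesis unfolding cond_prob_def using e1 e2 by simp
  qed
  have diff: "Pr - Prr = X"
  proof -
    have "Pr = EE n m (\<lambda>\<Phi>. (\<Sum>is\<in>L n (n - s). w \<Phi> {} is * (1 - \<rho> \<Phi> (set is))) + (\<Sum>is\<in>L n (n - s). w \<Phi> {} is * \<rho> \<Phi> (set is)))"
      unfolding Pr_def by (intro Ex_cong) (simp add: sum.distrib[symmetric] algebra_simps)
    then show ?thesis unfolding X_def Prr_def by (simp add: Ex_add)
  qed
  have X0: "X \<ge> 0" unfolding X_def
    by (intro Ex_nonneg sum_nonneg mult_nonneg_nonneg w_nonneg) (use rho_le1 in auto)
  have Xb: "X \<le> 2 * \<beta> ^ M * Pr + 2 * EE n m (\<lambda>\<Phi>. if bad n M \<Phi> then 1 else 0)"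
    unfolding X_def Pr_def \<beta>_def by (rule X_bound[OF n1 s1 sn])
  have Bb: "EE n m (\<lambda>\<Phi>. if bad n M \<Phi> then 1 else 0) \<le> Pb"
    unfolding Pb_def by (rule bad_bound[OF n1])
  have Lb0: "Lb > 0" unfolding Lb_def using N0 n1 by simp
  have PrL: "Pr \<ge> Lb"
  proof -
    have "Pr = EE n m (\<lambda>\<Phi>. measure (measure_pmf (pur n \<Phi>)) {r. fst r \<le> s})"
      using e1 unfolding pur_run_def measure_formula_bind[OF n1] by simp
    then show ?thesis unfolding Lb_def using lower[OF n1 _ km] sn by simp
  qed
  have Pr0: "Pr > 0" using Lb0 PrL by linarith
  have Pb0: "Pb \<ge> 0" unfolding Pb_def by simp
  have "1 - Prr / Pr = X / Pr" using diff Pr0 by (simp add: field_simps)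
  also have "\<dots> \<le> (2 * \<beta> ^ M * Pr + 2 * Pb) / Pr"
    using Xb Bb Pr0 by (intro divide_right_mono) auto
  also have "\<dots> = 2 * \<beta> ^ M + 2 * Pb / Pr" using Pr0 by (simp add: field_simps)
  also have "\<dots> \<le> 2 * \<beta> ^ M + 2 * Pb / Lb"
    using Pb0 Lb0 PrL by (simp add: frac_le)
  finally have up: "1 - Prr / Pr \<le> 2 * \<beta> ^ M + 2 * Pb / Lb" .
  have lo: "0 \<le> 1 - Prr / Pr" using \<open>1 - Prr / Pr = X / Pr\<close> X0 Pr0 by simp
  show ?thesis unfolding C using up lo unfolding \<beta>_def Pb_def Lb_def by simp
qed

lemma T1_bound:
  fixes N W L :: real and M k :: nat
  assumes N0: "N > 0" and kN: "2 ^ (k - 1) \<le> N" and NW: "N \<le> W" and W0: "W > 0" and LM: "L \<le> real M"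
  shows "(1 - 2 ^ (k - 1) / N) ^ M \<le> exp (- (2 ^ (k - 1) / W * L))"
proof -
  define x where "x = 2 ^ (k - 1) / N"
  have x01: "0 \<le> x" "x \<le> 1" unfolding x_def using N0 kN by auto
  have "(1 - x) ^ M \<le> exp (- x) ^ M"
    using exp_ge_add_one_self[of "-x"] x01 by (intro power_mono) auto
  also have "\<dots> = exp (- (x * M))" by (simp add: exp_of_nat_mult[symmetric] mult.commute)
  also have "\<dots> \<le> exp (- (2 ^ (k - 1) / W * L))"
  proof -
    have x'x: "2 ^ (k - 1) / W \<le> x" unfolding x_def using N0 NW by (intro divide_left_mono) auto
    have x'0: "0 \<le> 2 ^ (k - 1) / W" using W0 by simp
    have "2 ^ (k - 1) / W * L \<le> x * M"
    proof (cases "L \<le> 0")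
      case True
      have "2 ^ (k - 1) / W * L \<le> 0" by (rule mult_nonneg_nonpos[OF x'0 True])
      also have "0 \<le> x * M" using x01 by simp
      finally show ?thesis .
    next
      case False
      have "2 ^ (k - 1) / W * L \<le> x * L" using x'x False by (intro mult_right_mono) auto
      also have "\<dots> \<le> x * M" using LM x01 by (intro mult_left_mono) auto
      finally show ?thesis .
    qed
    then show ?thesis by simp
  qed
  finally show ?thesis unfolding x_def .
qed

lemma pow_exp_ln: "x > 0 \<Longrightarrow> (x::real) ^ n = exp (real n * ln x)"
  by (simp add: exp_of_nat_mult)

lemma T2_bound:
  fixes L :: real
  assumes n15: "n \<ge> 15" and kn: "k \<le> n" and km: "k \<le> m" and Mdef: "M = m div 4" and LM: "L \<le> real M"
  shows "2 * (2 ^ n * (((card (HH n) + (n + 1) * 2 ^ (n - 1)) / card (HH n)) ^ m / 2 ^ (m - M))) /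
       ((1 / card (HH n)) ^ k * (real (n * 2 ^ n) / card (HH n)) ^ (m - k))
     \<le> 2 * exp (real n * ln 2 + real n * ln (real n + 1) + real n ^ 2 * ln 2 - L / 10)"
proof -
  define N where "N = real (card (HH n))"
  define D where "D = real n * 2 ^ n"
  define T where "T = N + (real n + 1) * 2 ^ (n - 1)"
  define R where "R = T / D"
  have n1: "n \<ge> 1" using n15 by simp
  have cH: "card (HH n) + 1 = (n + 1) * 2 ^ n"
    unfolding card_HH using n1 by (simp add: Suc_le_eq)
  have NN: "N + 1 = (real n + 1) * 2 ^ n"
    unfolding N_def using arg_cong[OF cH, of real] by (simp add: algebra_simps)
  have D1: "D \<ge> 1"
  proof -
    have "1 * 1 \<le> real n * 2 ^ n" by (rule mult_mono) (use n1 in auto)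
    then show ?thesis unfolding D_def by simp
  qed
  have ND: "N \<ge> D"
  proof -
    have h: "(1::real) \<le> 2 ^ n" by simp
    have e: "N = 2 ^ n + real n * 2 ^ n - 1" using NN by (simp add: algebra_simps)
    show ?thesis using h e unfolding D_def by linarith
  qed
  have N0: "N > 0" using ND D1 by linarith
  have NU: "N \<le> (real n + 1) * 2 ^ n" using NN by linarith
  have h2: "(2::real) ^ (n - 1) = 2 ^ n / 2" using n1 by (simp add: power_diff)
  have R85: "R \<le> 8 / 5"
  proof -
    have "T \<le> (real n + 1) * 2 ^ n + (real n + 1) * 2 ^ n / 2"
      unfolding T_def h2 using NU by simp
    also have "\<dots> \<le> 8 / 5 * D" unfolding D_def using n15 by (simp add: field_simps)
    finally show ?thesis unfolding R_def using D1 by (simp add: divide_le_eq)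
  qed
  have R0: "R \<ge> 0" unfolding R_def T_def using N0 D1 by simp
  have lhs: "2 * (2 ^ n * (((card (HH n) + (n + 1) * 2 ^ (n - 1)) / card (HH n)) ^ m / 2 ^ (m - M))) /
       ((1 / card (HH n)) ^ k * (real (n * 2 ^ n) / card (HH n)) ^ (m - k))
      = 2 * (2 ^ n * D ^ k * R ^ m / 2 ^ (m - M))"
  proof -
    have e1: "((card (HH n) + (n + 1) * 2 ^ (n - 1)) / card (HH n)) ^ m = R ^ m * D ^ m / N ^ m"
    proof -
      have "((card (HH n) + (n + 1) * 2 ^ (n - 1)) / card (HH n)) ^ m = (T / N) ^ m"
        unfolding T_def N_def by (simp add: algebra_simps)
      also have "T / N = R * D / N" unfolding R_def using D1 by simp
      finally show ?thesis by (simp add: power_divide power_mult_distrib)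
    qed
    have e2: "(1 / card (HH n)) ^ k * (real (n * 2 ^ n) / card (HH n)) ^ (m - k) = D ^ (m - k) / N ^ m"
    proof -
      have "N ^ k * N ^ (m - k) = N ^ m" using km by (simp add: power_add[symmetric])
      then show ?thesis unfolding N_def D_def by (simp add: power_divide power_one_over field_simps)
    qed
    have e3: "D ^ m = D ^ k * D ^ (m - k)" using km by (simp add: power_add[symmetric])
    show ?thesis unfolding e1 e2 e3 using N0 D1 by (simp add: field_simps)
  qed
  have b1: "D ^ k \<le> ((real n + 1) * 2 ^ n) ^ n"
  proof -
    have "D ^ k \<le> D ^ n" using D1 kn by (intro power_increasing) auto
    also have "\<dots> \<le> ((real n + 1) * 2 ^ n) ^ n" using D1 ND NU by (intro power_mono) auto
    finally show ?thesis .
  qed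
  have b2: "R ^ m / 2 ^ (m - M) \<le> exp (- L / 10)"
  proof -
    have "R ^ m / 2 ^ (m - M) \<le> (8 / 5) ^ m / 2 ^ (m - M)"
      using R85 R0 by (intro divide_right_mono power_mono) auto
    also have "(8 / 5 :: real) ^ m = (8 / 5) ^ M * (8 / 5) ^ (m - M)"
      using Mdef by (simp add: power_add[symmetric])
    also have "\<dots> / 2 ^ (m - M) = (8 / 5) ^ M * (4 / 5) ^ (m - M)"
    proof -
      have "(4 / 5 :: real) = (8 / 5) / 2" by simp
      then have "(8 / 5 :: real) ^ (m - M) / 2 ^ (m - M) = (4 / 5) ^ (m - M)" by (simp only: power_divide)
      then show ?thesis by (metis times_divide_eq_right)
    qed
    also have "\<dots> \<le> (8 / 5) ^ M * (4 / 5) ^ (3 * M)"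
      using Mdef by (intro mult_left_mono power_decreasing) auto
    also have "\<dots> = (512 / 625) ^ M"
    proof -
      have a: "(4 / 5 :: real) ^ (3 * M) = ((4 / 5) ^ 3) ^ M" by (rule power_mult)
      have b: "((4 / 5 :: real) ^ 3) = 64 / 125" by (simp add: eval_nat_numeral)
      have c: "(8 / 5 :: real) ^ M * (64 / 125) ^ M = (8 / 5 * (64 / 125)) ^ M" by (rule power_mult_distrib[symmetric])
      show ?thesis unfolding a b c by simp
    qed
    also have "\<dots> \<le> exp (- 1 / 10) ^ M"
    proof (intro power_mono)
      have "1 + (- 1 / 10) \<le> exp (- 1 / 10 :: real)" by (rule exp_ge_add_one_self)
      then show "512 / 625 \<le> exp (- 1 / 10 :: real)" by simp
    qed auto
    also have "\<dots> = exp (- real M / 10)" by (simp add: exp_of_nat_mult[symmetric])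
    also have "\<dots> \<le> exp (- L / 10)" using LM by simp
    finally show ?thesis .
  qed
  have "2 ^ n * D ^ k * R ^ m / 2 ^ (m - M) = 2 ^ n * D ^ k * (R ^ m / 2 ^ (m - M))" by simp
  also have "\<dots> \<le> 2 ^ n * ((real n + 1) * 2 ^ n) ^ n * exp (- L / 10)"
    using b1 b2 D1 R0 by (intro mult_mono) auto
  also have "\<dots> = exp (real n * ln 2 + real n * ln (real n + 1) + real n ^ 2 * ln 2 - L / 10)"
  proof -
    have "(2::real) ^ n = exp (real n * ln 2)" by (rule pow_exp_ln) simp
    moreover have "((real n + 1) * 2 ^ n) ^ n = exp (real n * ln ((real n + 1) * 2 ^ n))"
      by (rule pow_exp_ln) simp
    moreover have "ln ((real n + 1) * 2 ^ n) = ln (real n + 1) + real n * ln 2"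
      by (simp add: ln_mult ln_realpow)
    ultimately show ?thesis by (simp add: exp_add[symmetric] exp_diff algebra_simps power2_eq_square)
  qed
  finally show ?thesis unfolding lhs by simp
qed

lemma Y_alg:
  fixes x Q P c :: real
  assumes "x > 0" "Q > 0"
  shows "P / 2 / ((x + 1) * Q) * ((c * Q - 5) / 4) = P / x * (x / (x + 1) * (c - 5 / Q) / 8)"
proof -
  have "x + 1 \<noteq> 0" "x \<noteq> 0" "Q \<noteq> 0" using assms by auto
  have p1: "Q * 8 + Q * (x * 8) > 0" using assms by (simp add: add_pos_pos)
  have p2: "Q * (x * 8) + Q * (x * (x * 8)) > 0" using assms by (simp add: add_pos_pos)
  show ?thesis using \<open>x + 1 \<noteq> 0\<close> \<open>x \<noteq> 0\<close> \<open>Q \<noteq> 0\<close>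
    apply (simp add: field_simps)
    apply (subst frac_eq_eq)
      apply (use p1 p2 in simp_all)
    apply (simp add: algebra_simps)
    done
qed

lemma Y_eq:
  fixes c :: real
  assumes n1: "n \<ge> 1" and pn: "p < n"
  shows "2 ^ (n - p - 1) / ((real n + 1) * 2 ^ n) * ((c * 2 ^ n - 5) / 4)
       = 2 powr (real n - log 2 (real n) - real p) * (real n / (real n + 1) * (c - 5 / 2 ^ n) / 8)"
proof -
  have a: "(2::real) ^ (n - p - 1) = 2 powr (real n - real p) / 2"
  proof -
    have "(2::real) ^ (n - p - 1) = 2 powr real (n - p - 1)" by (simp add: powr_realpow)
    also have "real (n - p - 1) = (real n - real p) - 1" using pn by (simp add: of_nat_diff)
    also have "(2::real) powr ((real n - real p) - 1) = 2 powr (real n - real p) / 2"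
      by (simp add: powr_diff)
    finally show ?thesis .
  qed
  have b: "(2::real) powr (real n - log 2 (real n) - real p) = 2 powr (real n - real p) / real n"
  proof -
    have "real n - log 2 (real n) - real p = (real n - real p) - log 2 (real n)" by simp
    then have "(2::real) powr (real n - log 2 (real n) - real p) = 2 powr (real n - real p) / 2 powr (log 2 (real n))"
      by (simp add: powr_diff)
    also have "(2::real) powr (log 2 (real n)) = real n" using n1 by simp
    finally show ?thesis .
  qed
  have nz: "real n \<noteq> 0" using n1 by simp
  have nz2: "real n + 1 \<noteq> 0" by linarith
  show ?thesis unfolding a b using n1 by (intro Y_alg) auto
qed

lemma Z_lim:
  fixes c :: real assumes "c > 0"
  shows "(\<lambda>n::nat. 2 * exp (real n * ln 2 + real n * ln (real n + 1) + real n ^ 2 * ln 2 - (c * 2 ^ n - 5) / 4 / 10)) \<longlonglongrightarrow> 0"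
proof -
  have "filterlim (\<lambda>n::nat. real n * ln 2 + real n * ln (real n + 1) + real n ^ 2 * ln 2 - (c * 2 ^ n - 5) / 4 / 10) at_bot at_top"
    using assms by real_asymp
  then have "(\<lambda>n::nat. exp (real n * ln 2 + real n * ln (real n + 1) + real n ^ 2 * ln 2 - (c * 2 ^ n - 5) / 4 / 10)) \<longlonglongrightarrow> 0"
    by (rule filterlim_compose[OF exp_at_bot])
  then show ?thesis using tendsto_mult_right_zero by blast
qed

lemma aux_lim:
  fixes c :: real assumes "c > 0"
  shows "(\<lambda>n::nat. real n / (real n + 1) * (c - 5 / 2 ^ n) / 8) \<longlonglongrightarrow> c / 8"
  using assms by real_asymp

lemma aux_ev:
  fixes c :: real assumes "c > 0"
  shows "eventually (\<lambda>n::nat. c * 2 ^ n - 1 \<ge> real n) sequentially"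
  using assms by real_asymp

theorem mainTheorem5:
  fixes c :: real and p :: "nat \<Rightarrow> nat"
  assumes "c > 0"
    and "\<And>n. n \<ge> 1 \<Longrightarrow> 1 \<le> p n \<and> p n \<le> n"
    and "filterlim (\<lambda>n. real n - log 2 (real n) - real (p n)) at_top sequentially"
  shows "(\<lambda>n. cond_prob (measure_pmf (pur_run n (nat \<lfloor>c * 2 ^ n\<rfloor>)))
              (rejects_at_stage (p n)) (reaches_stage (p n))) \<longlonglongrightarrow> 1"
proof -
  note c0 = assms(1) and pb = assms(2) and dlim = assms(3)
  define d where "d n = real n - log 2 (real n) - real (p n)" for n
  define m where "m n = nat \<lfloor>c * 2 ^ n\<rfloor>" for n
  define M where "M n = m n div 4" for n
  define Y where "Y n = 2 ^ (n - p n - 1) / ((real n + 1) * 2 ^ n) * ((c * 2 ^ n - 5) / 4)" for n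
  define Z where "Z n = 2 * exp (real n * ln 2 + real n * ln (real n + 1) + real n ^ 2 * ln 2 - (c * 2 ^ n - 5) / 4 / 10)" for n
  define C where "C n = cond_prob (measure_pmf (pur_run n (nat \<lfloor>c * 2 ^ n\<rfloor>))) (rejects_at_stage (p n)) (reaches_stage (p n))" for n
  have ev_d: "eventually (\<lambda>n. d n \<ge> 1) sequentially"
    using dlim unfolding d_def filterlim_at_top by blast
  have ev: "eventually (\<lambda>n. \<bar>C n - 1\<bar> \<le> 2 * exp (- Y n) + Z n) sequentially"
    using ev_d aux_ev[OF c0] eventually_ge_at_top[of 15]
  proof eventually_elim
    case (elim n)
    have n15: "n \<ge> 15" and n1: "n \<ge> 1" using elim by auto
    have s1: "1 \<le> p n" and psn: "p n \<le> n" using pb[OF n1] by auto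
    have lg: "log 2 (real n) \<ge> 0" using n1 by simp
    have sn: "p n < n" using elim(1) lg unfolding d_def by linarith
    have mge: "real (m n) \<ge> c * 2 ^ n - 1"
    proof -
      have "c * 2 ^ n \<ge> 0" using c0 by simp
      then have "real (m n) = real_of_int \<lfloor>c * 2 ^ n\<rfloor>" unfolding m_def by simp
      then show ?thesis by linarith
    qed
    have km: "n - p n \<le> m n" using mge elim(2) by linarith
    have LM: "(c * 2 ^ n - 5) / 4 \<le> real (M n)"
    proof -
      have "real (m n) \<le> 4 * real (M n) + 3" unfolding M_def by linarith
      then have "c * 2 ^ n - 5 \<le> 4 * real (M n)" using mge by linarith
      then show ?thesis by simp
    qed
    have cb: "\<bar>C n - 1\<bar> \<le> 2 * (1 - 2 ^ (n - p n - 1) / real (card (HH n))) ^ M n +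
       2 * (2 ^ n * (((card (HH n) + (n + 1) * 2 ^ (n - 1)) / card (HH n)) ^ m n / 2 ^ (m n - M n))) /
       ((1 / card (HH n)) ^ (n - p n) * (real (n * 2 ^ n) / card (HH n)) ^ (m n - (n - p n)))"
      unfolding C_def m_def[symmetric] by (rule cond_bound[OF n1 s1 sn km])
    have N0: "real (card (HH n)) > 0" using card_HH_pos[OF n1] by simp
    have NW: "real (card (HH n)) \<le> (real n + 1) * 2 ^ n"
    proof -
      have "card (HH n) \<le> (n + 1) * 2 ^ n" unfolding card_HH by simp
      then have "real (card (HH n)) \<le> real ((n + 1) * 2 ^ n)" by (rule of_nat_mono)
      then show ?thesis by (simp add: algebra_simps)
    qed
    have kN: "2 ^ (n - p n - 1) \<le> real (card (HH n))"
    proof -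
      have "(2::nat) ^ (n - p n - 1) \<le> 2 ^ n" by (intro power_increasing) auto
      also have "\<dots> \<le> card (HH n)" by (rule card_HH_ge[OF n1])
      finally have "real (2 ^ (n - p n - 1)) \<le> real (card (HH n))" by (rule of_nat_mono)
      then show ?thesis by simp
    qed
    have t1: "(1 - 2 ^ (n - p n - 1) / real (card (HH n))) ^ M n \<le> exp (- Y n)"
      unfolding Y_def by (rule T1_bound[OF N0 kN NW _ LM]) simp
    have t2: "2 * (2 ^ n * (((card (HH n) + (n + 1) * 2 ^ (n - 1)) / card (HH n)) ^ m n / 2 ^ (m n - M n))) /
       ((1 / card (HH n)) ^ (n - p n) * (real (n * 2 ^ n) / card (HH n)) ^ (m n - (n - p n))) \<le> Z n"
      unfolding Z_def by (rule T2_bound[OF n15 _ km M_def LM]) simp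
    show ?case using cb t1 t2 by linarith
  qed
  have Ylim: "filterlim Y at_top sequentially"
  proof -
    have "filterlim (\<lambda>n. 2 powr d n) at_top sequentially"
    proof (rule filterlim_compose[of "\<lambda>x. 2 powr x" at_top at_top d])
      show "filterlim (\<lambda>x::real. 2 powr x) at_top at_top" by real_asymp
      show "filterlim d at_top sequentially" using dlim unfolding d_def .
    qed
    then have A: "filterlim (\<lambda>n. (real n / (real n + 1) * (c - 5 / 2 ^ n) / 8) * 2 powr d n) at_top sequentially"
      using c0 by (intro filterlim_tendsto_pos_mult_at_top[OF aux_lim[OF c0]]) auto
    have B: "eventually (\<lambda>n. (real n / (real n + 1) * (c - 5 / 2 ^ n) / 8) * 2 powr d n = Y n) sequentially"
      using ev_d eventually_ge_at_top[of 1]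
    proof eventually_elim
      case (elim n)
      have "log 2 (real n) \<ge> 0" using elim by simp
      then have "p n < n" using elim unfolding d_def by linarith
      then show ?case unfolding Y_def d_def using Y_eq[OF elim(2), of "p n" c] by simp
    qed
    show ?thesis using filterlim_cong[OF refl refl B] A by simp
  qed
  have lim1: "(\<lambda>n. 2 * exp (- Y n)) \<longlonglongrightarrow> 0"
  proof -
    have "filterlim (\<lambda>n. - Y n) at_bot sequentially"
      using Ylim by (simp add: filterlim_uminus_at_top)
    then have "(\<lambda>n. exp (- Y n)) \<longlonglongrightarrow> 0" by (rule filterlim_compose[OF exp_at_bot])
    then show ?thesis using tendsto_mult_right_zero by blast
  qed
  have lim2: "Z \<longlonglongrightarrow> 0" unfolding Z_def using Z_lim[OF c0] .
  have "(\<lambda>n. 2 * exp (- Y n) + Z n) \<longlonglongrightarrow> 0" using tendsto_add[OF lim1 lim2] by simp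
  then have "(\<lambda>n. C n - 1) \<longlonglongrightarrow> 0"
    by (rule Lim_null_comparison[rotated]) (use ev in simp)
  then have "C \<longlonglongrightarrow> 1" by (rule LIM_zero_cancel)
  then show ?thesis unfolding C_def .
qed

end
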